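(* Let $f\in C^0([0,T];L^2(\Omega))$ and $u_h^0\in L^2(\Omega)$. Let $0=t_0<\dots<t_N=T$, $k_n:=t_n-t_{n-1}$, $f^n:=f(t_n)$, let $U_h^n\subseteq U$ be closed subspaces, and let $\mathbf u_h^n=(u_h^n,\boldsymbol\sigma_h^n)\in U_h^n$, $n=1,\dots,N$, be the solutions of $B_{k_n}(\mathbf u_h^n,\mathbf v_h)=F_n(\mathbf v_h;f^n,u_h^{n-1})$ for all $\mathbf v_h\in U_h^n$. Then for every $n=1,\dots,N$, $$\|u_h^n\|\le\sum_{j=1}^n k_j\|f^j\|+\|u_h^0\|.$$
   Context: $\Omega\subset\mathbb{R}^d$ is a bounded Lipschitz domain with polygonal boundary; $(\cdot,\cdot)$, $\|\cdot\|$ denote the $L^2(\Omega)$ inner product and norm. Coefficients: $\mathbf{A}\in L^\infty(\Omega)^{d\times d}$ symmetric with $\lambda_{\min}(\mathbf{A})\ge\alpha_0>0$ a.e., $\boldsymbol\beta\in L^\infty(\Omega)^d$, $\gamma\in L^\infty(\Omega)$, with $\tfrac12\operatorname{div}\boldsymbol\beta+\gamma\in L^\infty(\Omega)$, $\tfrac12\operatorname{div}\boldsymbol\beta+\gamma\ge0$ a.e. $U:=H^1_0(\Omega)\times H(\operatorname{div},\Omega)$. For $k>0$ and $\mathbf{u}=(u,\boldsymbol\sigma),\mathbf{v}=(v,\boldsymbol\tau)\in U$: $\tilde b_k(\mathbf u,\mathbf v):=(-\operatorname{div}\boldsymbol\sigma-\boldsymbol\beta\cdot\nabla u+\gamma u,v)+k(-\operatorname{div}\boldsymbol\sigma-\boldsymbol\beta\cdot\nabla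 u+\gamma u,-\operatorname{div}\boldsymbol\tau-\boldsymbol\beta\cdot\nabla v+\gamma v)+(\mathbf A^{1/2}\nabla u-\mathbf A^{-1/2}\boldsymbol\sigma,\mathbf A^{1/2}\nabla v-\mathbf A^{-1/2}\boldsymbol\tau)$; $b_k(\mathbf u,\mathbf v):=(u,-\operatorname{div}\boldsymbol\tau-\boldsymbol\beta\cdot\nabla v+\gamma v)+\tilde b_k(\mathbf u,\mathbf v)$; $B_k(\mathbf u,\mathbf v):=\frac1k(u,v)+b_k(\mathbf u,\mathbf v)$. For $g,w\in L^2(\Omega)$: $F_n(\mathbf v;g,w):=k_n\big(g+\tfrac{w}{k_n},\tfrac{v}{k_n}-\operatorname{div}\boldsymbol\tau-\boldsymbol\beta\cdot\nabla v+\gamma v\big)$. *)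

theory Defs
  imports "HOL-Analysis.Analysis"
begin

definition lipschitz_domain :: "(real^'d::finite) set \<Rightarrow> bool" where
  "lipschitz_domain \<Omega> \<longleftrightarrow> open \<Omega> \<and> connected \<Omega> \<and> bounded \<Omega> \<and> \<Omega> \<noteq> {} \<and>
     (\<forall>x\<in>frontier \<Omega>. \<exists>r>0. \<exists>e g L. norm e = 1 \<and> L-lipschitz_on {z. z \<bullet> e = 0} g \<and>
        \<Omega> \<inter> ball x r = {y \<in> ball x r. y \<bullet> e > g (y - (y \<bullet> e) *\<^sub>R e)})"

definition polygonal_boundary :: "(real^'d::finite) set \<Rightarrow> bool" where
  "polygonal_boundary \<Omega> \<longleftrightarrow> (\<exists>F. finite F \<and> (\<forall>P\<in>F. polytope P) \<and> frontier \<Omega> = \<Union>F)"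

fun Ck :: "nat \<Rightarrow> (real^'d::finite \<Rightarrow> real) \<Rightarrow> bool" where
  "Ck 0 \<phi> = continuous_on UNIV \<phi>"
| "Ck (Suc k) \<phi> = ((\<forall>x. \<phi> differentiable (at x)) \<and>
      (\<forall>i. Ck k (\<lambda>x. frechet_derivative \<phi> (at x) (axis i 1))))"

definition cgrad :: "(real^'d::finite \<Rightarrow> real) \<Rightarrow> real^'d::finite \<Rightarrow> real^'d::finite" where
  "cgrad \<phi> x = (\<chi> i. frechet_derivative \<phi> (at x) (axis i 1))"

definition test_fun :: "(real^'d::finite) set \<Rightarrow> (real^'d::finite \<Rightarrow> real) \<Rightarrow> bool" where
  "test_fun \<Omega> \<phi> \<longleftrightarrow> (\<forall>k. Ck k \<phi>) \<and> compact (closure {x. \<phi> x \<noteq> 0}) \<and>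
     closure {x. \<phi> x \<noteq> 0} \<subseteq> \<Omega>"

definition L2 :: "(real^'d::finite) set \<Rightarrow> (real^'d::finite \<Rightarrow> real) \<Rightarrow> bool" where
  "L2 \<Omega> u \<longleftrightarrow> u \<in> borel_measurable (lebesgue_on \<Omega>) \<and> integrable (lebesgue_on \<Omega>) (\<lambda>x. (u x)\<^sup>2)"

definition L2v :: "(real^'d::finite) set \<Rightarrow> (real^'d::finite \<Rightarrow> real^'d::finite) \<Rightarrow> bool" where
  "L2v \<Omega> \<sigma> \<longleftrightarrow> (\<forall>i. L2 \<Omega> (\<lambda>x. \<sigma> x $ i))"

definition Linf :: "(real^'d::finite) set \<Rightarrow> (real^'d::finite \<Rightarrow> real) \<Rightarrow> bool" where
  "Linf \<Omega> u \<longleftrightarrow> u \<in> borel_measurable (lebesgue_on \<Omega>) \<and> (\<exists>C. AE x in lebesgue_on \<Omega>. \<bar>u x\<bar> \<le> C)"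

definition ip :: "(real^'d::finite) set \<Rightarrow> (real^'d::finite \<Rightarrow> real) \<Rightarrow> (real^'d::finite \<Rightarrow> real) \<Rightarrow> real" where
  "ip \<Omega> u v = (\<integral>x. u x * v x \<partial>lebesgue_on \<Omega>)"

definition ipv :: "(real^'d::finite) set \<Rightarrow> (real^'d::finite \<Rightarrow> real^'d::finite) \<Rightarrow> (real^'d::finite \<Rightarrow> real^'d::finite) \<Rightarrow> real" where
  "ipv \<Omega> \<sigma> \<tau> = (\<integral>x. \<sigma> x \<bullet> \<tau> x \<partial>lebesgue_on \<Omega>)"

definition nrm :: "(real^'d::finite) set \<Rightarrow> (real^'d::finite \<Rightarrow> real) \<Rightarrow> real" where
  "nrm \<Omega> u = sqrt (ip \<Omega> u u)"

definition nrmv :: "(real^'d::finite) set \<Rightarrow> (real^'d::finite \<Rightarrow> real^'d::finite) \<Rightarrow> real" where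
  "nrmv \<Omega> \<sigma> = sqrt (ipv \<Omega> \<sigma> \<sigma>)"

definition is_weak_grad :: "(real^'d::finite) set \<Rightarrow> (real^'d::finite \<Rightarrow> real) \<Rightarrow> (real^'d::finite \<Rightarrow> real^'d::finite) \<Rightarrow> bool" where
  "is_weak_grad \<Omega> u G \<longleftrightarrow> G \<in> borel_measurable (lebesgue_on \<Omega>) \<and>
     (\<forall>\<phi>. test_fun \<Omega> \<phi> \<longrightarrow> (\<forall>i.
        integrable (lebesgue_on \<Omega>) (\<lambda>x. u x * cgrad \<phi> x $ i) \<and>
        integrable (lebesgue_on \<Omega>) (\<lambda>x. G x $ i * \<phi> x) \<and>
        (\<integral>x. u x * cgrad \<phi> x $ i \<partial>lebesgue_on \<Omega>) = - (\<integral>x. G x $ i * \<phi> x \<partial>lebesgue_on \<Omega>)))"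

definition is_weak_div :: "(real^'d::finite) set \<Rightarrow> (real^'d::finite \<Rightarrow> real^'d::finite) \<Rightarrow> (real^'d::finite \<Rightarrow> real) \<Rightarrow> bool" where
  "is_weak_div \<Omega> \<sigma> D \<longleftrightarrow> D \<in> borel_measurable (lebesgue_on \<Omega>) \<and>
     (\<forall>\<phi>. test_fun \<Omega> \<phi> \<longrightarrow>
        integrable (lebesgue_on \<Omega>) (\<lambda>x. \<sigma> x \<bullet> cgrad \<phi> x) \<and>
        integrable (lebesgue_on \<Omega>) (\<lambda>x. D x * \<phi> x) \<and>
        (\<integral>x. \<sigma> x \<bullet> cgrad \<phi> x \<partial>lebesgue_on \<Omega>) = - (\<integral>x. D x * \<phi> x \<partial>lebesgue_on \<Omega>))"

definition wgrad :: "(real^'d::finite) set \<Rightarrow> (real^'d::finite \<Rightarrow> real) \<Rightarrow> real^'d::finite \<Rightarrow> real^'d::finite" where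
  "wgrad \<Omega> u = (SOME G. L2v \<Omega> G \<and> is_weak_grad \<Omega> u G)"

definition wdiv :: "(real^'d::finite) set \<Rightarrow> (real^'d::finite \<Rightarrow> real^'d::finite) \<Rightarrow> real^'d::finite \<Rightarrow> real" where
  "wdiv \<Omega> \<sigma> = (SOME D. L2 \<Omega> D \<and> is_weak_div \<Omega> \<sigma> D)"

definition H1 :: "(real^'d::finite) set \<Rightarrow> (real^'d::finite \<Rightarrow> real) \<Rightarrow> bool" where
  "H1 \<Omega> u \<longleftrightarrow> L2 \<Omega> u \<and> (\<exists>G. L2v \<Omega> G \<and> is_weak_grad \<Omega> u G)"

definition H10 :: "(real^'d::finite) set \<Rightarrow> (real^'d::finite \<Rightarrow> real) \<Rightarrow> bool" where
  "H10 \<Omega> u \<longleftrightarrow> H1 \<Omega> u \<and> (\<exists>\<phi>. (\<forall>n. test_fun \<Omega> (\<phi> n)) \<and>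
     (\<lambda>n. nrm \<Omega> (\<lambda>x. \<phi> n x - u x) + nrmv \<Omega> (\<lambda>x. cgrad (\<phi> n) x - wgrad \<Omega> u x)) \<longlonglongrightarrow> 0)"

definition Hdiv :: "(real^'d::finite) set \<Rightarrow> (real^'d::finite \<Rightarrow> real^'d::finite) \<Rightarrow> bool" where
  "Hdiv \<Omega> \<sigma> \<longleftrightarrow> L2v \<Omega> \<sigma> \<and> (\<exists>D. L2 \<Omega> D \<and> is_weak_div \<Omega> \<sigma> D)"

type_synonym 'd pr = "(real^'d \<Rightarrow> real) \<times> (real^'d \<Rightarrow> real^'d)"

definition Uspace :: "(real^'d::finite) set \<Rightarrow> 'd pr set" where
  "Uspace \<Omega> = {(u, \<sigma>). H10 \<Omega> u \<and> Hdiv \<Omega> \<sigma>}"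

definition Unorm :: "(real^'d::finite) set \<Rightarrow> 'd pr \<Rightarrow> real" where
  "Unorm \<Omega> w = sqrt ((nrm \<Omega> (fst w))\<^sup>2 + (nrmv \<Omega> (wgrad \<Omega> (fst w)))\<^sup>2
      + (nrmv \<Omega> (snd w))\<^sup>2 + (nrm \<Omega> (wdiv \<Omega> (snd w)))\<^sup>2)"

definition pdiff :: "('d::finite) pr \<Rightarrow> 'd pr \<Rightarrow> 'd pr" where
  "pdiff v w = ((\<lambda>x. fst v x - fst w x), (\<lambda>x. snd v x - snd w x))"

definition closed_subspace_U :: "(real^'d::finite) set \<Rightarrow> 'd pr set \<Rightarrow> bool" where
  "closed_subspace_U \<Omega> V \<longleftrightarrow> V \<subseteq> Uspace \<Omega> \<and>
     ((\<lambda>x. 0), (\<lambda>x. 0)) \<in> V \<and>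
     (\<forall>v\<in>V. \<forall>w\<in>V. ((\<lambda>x. fst v x + fst w x), (\<lambda>x. snd v x + snd w x)) \<in> V) \<and>
     (\<forall>c::real. \<forall>v\<in>V. ((\<lambda>x. c * fst v x), (\<lambda>x. c *\<^sub>R snd v x)) \<in> V) \<and>
     (\<forall>s w. (\<forall>n. s n \<in> V) \<longrightarrow> w \<in> Uspace \<Omega> \<longrightarrow>
        (\<lambda>n. Unorm \<Omega> (pdiff (s n) w)) \<longlonglongrightarrow> 0 \<longrightarrow> w \<in> V)"

definition msqrt :: "real^'d::finite^'d \<Rightarrow> real^'d::finite^'d" where
  "msqrt M = (THE S. transpose S = S \<and> (\<forall>\<xi>. 0 \<le> \<xi> \<bullet> (S *v \<xi>)) \<and> S ** S = M)"

definition lambda_min :: "real^'d::finite^'d \<Rightarrow> real" where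
  "lambda_min M = Min {l. \<exists>v. v \<noteq> 0 \<and> M *v v = l *\<^sub>R v}"

definition Lop :: "(real^'d::finite) set \<Rightarrow> (real^'d::finite \<Rightarrow> real^'d::finite) \<Rightarrow> (real^'d::finite \<Rightarrow> real) \<Rightarrow> 'd pr \<Rightarrow> real^'d::finite \<Rightarrow> real" where
  "Lop \<Omega> \<beta> \<gamma> w x = - wdiv \<Omega> (snd w) x - \<beta> x \<bullet> wgrad \<Omega> (fst w) x + \<gamma> x * fst w x"

definition Flux :: "(real^'d::finite) set \<Rightarrow> (real^'d::finite \<Rightarrow> real^'d::finite^'d) \<Rightarrow> 'd pr \<Rightarrow> real^'d::finite \<Rightarrow> real^'d::finite" where
  "Flux \<Omega> A w x = msqrt (A x) *v wgrad \<Omega> (fst w) x - matrix_inv (msqrt (A x)) *v snd w x"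

definition btilde where
  "btilde \<Omega> A \<beta> \<gamma> (k::real) w v =
     ip \<Omega> (Lop \<Omega> \<beta> \<gamma> w) (fst v) + k * ip \<Omega> (Lop \<Omega> \<beta> \<gamma> w) (Lop \<Omega> \<beta> \<gamma> v)
     + ipv \<Omega> (Flux \<Omega> A w) (Flux \<Omega> A v)"

definition bform where
  "bform \<Omega> A \<beta> \<gamma> (k::real) w v = ip \<Omega> (fst w) (Lop \<Omega> \<beta> \<gamma> v) + btilde \<Omega> A \<beta> \<gamma> k w v"

definition Bform where
  "Bform \<Omega> A \<beta> \<gamma> (k::real) w v = (1 / k) * ip \<Omega> (fst w) (fst v) + bform \<Omega> A \<beta> \<gamma> k w v"

definition Fform where
  "Fform \<Omega> \<beta> \<gamma> (k::real) v g w =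
     k * ip \<Omega> (\<lambda>x. g x + w x / k) (\<lambda>x. fst v x / k + Lop \<Omega> \<beta> \<gamma> v x)"

end

theory Submission
  imports Defs
begin

lemma sym_dot:
  fixes M :: "real^'n^'n"
  assumes "transpose M = M"
  shows "x \<bullet> (M *v y) = (M *v x) \<bullet> y"
proof -
  have "x \<bullet> (M *v y) = (\<Sum>i\<in>UNIV. \<Sum>j\<in>UNIV. x$i * M$i$j * y$j)"
    by (simp add: inner_vec_def matrix_vector_mult_def sum_distrib_left mult.assoc)
  also have "\<dots> = (\<Sum>j\<in>UNIV. \<Sum>i\<in>UNIV. x$i * M$i$j * y$j)" by (rule sum.swap)
  also have "\<dots> = (M *v x) \<bullet> y"
  proof -
    have "M$i$j = M$j$i" for i j using assms by (metis transpose_def vec_lambda_beta)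
    hence "(\<Sum>j\<in>UNIV. \<Sum>i\<in>UNIV. x$i * M$i$j * y$j) = (\<Sum>j\<in>UNIV. \<Sum>i\<in>UNIV. M$j$i * x$i * y$j)"
      by (intro sum.cong refl) (simp add: mult.commute)
    then show ?thesis
      unfolding inner_vec_def matrix_vector_mult_def
      by (simp add: sum_distrib_right)
  qed
  finally show ?thesis .
qed

lemma quad_zero:
  fixes b c :: real
  assumes "c \<ge> 0" "\<forall>t. 0 \<le> 2*t*b + t^2*c"
  shows "b = 0"
proof (rule ccontr)
  assume "b \<noteq> 0"
  define t where "t = - b / (1 + c)"
  have h: "0 \<le> 2*t*b + t^2*c" using assms by auto
  have "(1+c)^2 * (2*t*b + t^2*c) = b^2 * (- 2 - c)"
  proof -
    have "1 + c > 0" using assms(1) by simp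
    then have e: "t*(1+c) = -b" by (simp add: t_def)
    have "(1+c)^2 * (2*t*b + t^2*c) = 2*b*(t*(1+c))*(1+c) + (t*(1+c))^2*c"
      by (simp add: power2_eq_square algebra_simps)
    also have "\<dots> = b^2 * (- 2 - c)" unfolding e by (simp add: power2_eq_square algebra_simps)
    finally show ?thesis .
  qed
  moreover have "(1+c)^2 * (2*t*b + t^2*c) \<ge> 0" using h assms(1) by simp
  moreover have "b^2 * (- 2 - c) < 0" using \<open>b \<noteq> 0\<close> assms(1)
    by (intro mult_pos_neg) auto
  ultimately show False by simp
qed

lemma spectral_sub:
  fixes M :: "real^'n^'n"
  assumes sym: "transpose M = M"
  shows "subspace W \<Longrightarrow> (\<forall>x\<in>W. M *v x \<in> W) \<Longrightarrow> dim W = m \<Longrightarrow>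
    \<exists>B. finite B \<and> B \<subseteq> W \<and> pairwise orthogonal B \<and>
       (\<forall>b\<in>B. norm b = 1 \<and> M *v b = (b \<bullet> (M *v b)) *\<^sub>R b) \<and> span B = W"
proof (induction m arbitrary: W)
  case 0
  then have "W \<subseteq> {0}" by (simp add: dim_eq_0)
  then have "W = {0}" using subspace_0[OF 0(1)] by auto
  then show ?case by (intro exI[of _ "{}"]) auto
next
  case (Suc m)
  note W = Suc.prems(1) and inv = Suc.prems(2) and dW = Suc.prems(3)
  obtain x where x: "x \<in> W" "x \<noteq> 0"
  proof -
    have "\<not> W \<subseteq> {0}" using dW by (auto simp: dim_eq_0[symmetric])
    then show ?thesis using that by auto
  qed
  define K where "K = W \<inter> sphere 0 1"
  have cK: "compact K" unfolding K_def
    by (intro closed_Int_compact closed_subspace W compact_sphere)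
  have xK: "(1 / norm x) *\<^sub>R x \<in> K" using x W unfolding K_def
    by (auto simp: subspace_scale)
  have cont: "continuous_on K (\<lambda>y. y \<bullet> (M *v y))"
    by (intro continuous_intros matrix_vector_mult_linear_continuous_on[unfolded o_def])
  obtain v where vK: "v \<in> K" and vmax: "\<forall>y\<in>K. y \<bullet> (M *v y) \<le> v \<bullet> (M *v v)"
    using continuous_attains_sup[OF cK _ cont] xK by blast
  define l where "l = v \<bullet> (M *v v)"
  have vW: "v \<in> W" and nv: "norm v = 1" using vK by (auto simp: K_def)
  have vv: "v \<bullet> v = 1" using nv by (simp add: norm_eq_1)
  have bound: "y \<bullet> (M *v y) \<le> l * (y \<bullet> y)" if y: "y \<in> W" for y
  proof (cases "y = 0")
    case True then show ?thesis by simp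
  next
    case False
    define z where "z = (1 / norm y) *\<^sub>R y"
    have "z \<in> K" using y False W by (auto simp: K_def z_def subspace_scale)
    then have "z \<bullet> (M *v z) \<le> l" using vmax l_def by auto
    moreover have "z \<bullet> (M *v z) = (y \<bullet> (M *v y)) / (norm y)^2"
      by (simp add: z_def matrix_vector_mult_scaleR power2_eq_square)
    moreover have "y \<bullet> y = (norm y)^2" by (simp add: power2_norm_eq_inner)
    moreover have "(norm y)^2 > 0" using False by simp
    ultimately show ?thesis by (simp add: divide_le_eq mult.commute)
  qed
  define N where "N = (\<lambda>y. l *\<^sub>R y - M *v y)"
  have NW: "N y \<in> W" if "y \<in> W" for y
    using that W inv by (simp add: N_def subspace_diff subspace_scale)
  have q: "0 \<le> y \<bullet> N y" if "y \<in> W" for y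
    using bound[OF that] by (simp add: N_def inner_diff_right)
  have Nv0: "v \<bullet> N v = 0" by (simp add: N_def inner_diff_right vv l_def)
  have Nsym: "a \<bullet> N b = b \<bullet> N a" for a b
  proof -
    have *: "a \<bullet> (M *v b) = b \<bullet> (M *v a)" by (metis sym_dot[OF sym] inner_commute)
    show ?thesis by (simp add: N_def inner_diff_right * inner_commute[of a b])
  qed
  have Nlin: "N (a + t *\<^sub>R b) = N a + t *\<^sub>R N b" for a b t
    by (simp add: N_def matrix_vector_right_distrib matrix_vector_mult_scaleR algebra_simps)
  have orth: "w \<bullet> N v = 0" if w: "w \<in> W" for w
  proof (rule quad_zero)
    show "0 \<le> w \<bullet> N w" using q[OF w] .
    show "\<forall>t. 0 \<le> 2 * t * (w \<bullet> N v) + t\<^sup>2 * (w \<bullet> N w)"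
    proof
      fix t
      have "v + t *\<^sub>R w \<in> W" using vW w W by (simp add: subspace_add subspace_scale)
      from q[OF this] have "0 \<le> (v + t *\<^sub>R w) \<bullet> (N v + t *\<^sub>R N w)" by (simp add: Nlin)
      also have "\<dots> = v \<bullet> N v + t * (v \<bullet> N w) + t * (w \<bullet> N v) + t^2 * (w \<bullet> N w)"
        by (simp add: inner_add_left inner_add_right power2_eq_square algebra_simps)
      also have "\<dots> = 2 * t * (w \<bullet> N v) + t\<^sup>2 * (w \<bullet> N w)"
        using Nv0 Nsym[of v w] by simp
      finally show "0 \<le> 2 * t * (w \<bullet> N v) + t\<^sup>2 * (w \<bullet> N w)" .
    qed
  qed
  have "N v \<bullet> N v = 0" using orth[OF NW[OF vW]] .
  then have "N v = 0" by simp
  then have Mv: "M *v v = l *\<^sub>R v" by (simp add: N_def)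
  define W' where "W' = {y \<in> W. \<forall>z\<in>span {v}. orthogonal z y}"
  have sv: "subspace (span {v})" by simp
  have svW: "span {v} \<subseteq> W" using vW W by (simp add: span_minimal)
  have dimW': "dim W' + dim (span {v}) = dim W"
    unfolding W'_def by (rule dim_subspace_orthogonal_to_vectors[OF sv W svW])
  have v0: "v \<noteq> 0" using nv by auto
  have "dim (span {v}) = 1" using v0 by (simp add: dim_span)
  then have dW': "dim W' = m" using dimW' dW by simp
  have W'eq: "W' = W \<inter> {y. \<forall>z\<in>span {v}. orthogonal z y}" unfolding W'_def by auto
  have sW': "subspace W'" unfolding W'eq
    by (intro subspace_inter W subspace_orthogonal_to_vectors)
  have invW': "\<forall>y\<in>W'. M *v y \<in> W'"
  proof
    fix y assume y: "y \<in> W'"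
    then have yW: "y \<in> W" and oy: "\<forall>z\<in>span {v}. orthogonal z y" by (auto simp: W'_def)
    have vy: "v \<bullet> y = 0" using oy by (simp add: orthogonal_def span_base)
    have "orthogonal z (M *v y)" if zs: "z \<in> span {v}" for z
    proof -
      obtain c where "z = c *\<^sub>R v" using zs by (auto simp: span_singleton)
      have "v \<bullet> (M *v y) = (M *v v) \<bullet> y" by (rule sym_dot[OF sym])
      also have "\<dots> = 0" using vy by (simp add: Mv)
      finally show ?thesis using \<open>z = c *\<^sub>R v\<close> by (simp add: orthogonal_def)
    qed
    then show "M *v y \<in> W'" using inv yW by (auto simp: W'_def)
  qed
  obtain B' where B': "finite B'" "B' \<subseteq> W'" "pairwise orthogonal B'"
     "\<forall>b\<in>B'. norm b = 1 \<and> M *v b = (b \<bullet> (M *v b)) *\<^sub>R b" "span B' = W'"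
    using Suc.IH[OF sW' invW' dW'] by blast
  show ?case
  proof (intro exI[of _ "insert v B'"] conjI)
    show "finite (insert v B')" using B' by simp
    show "insert v B' \<subseteq> W" using B'(2) vW by (auto simp: W'_def)
    show "pairwise orthogonal (insert v B')"
    proof -
      have "orthogonal v b \<and> orthogonal b v" if "b \<in> B'" for b
      proof -
        have "b \<in> W'" using that B'(2) by auto
        then have "orthogonal v b" by (auto simp: W'_def span_base)
        then show ?thesis by (simp add: orthogonal_commute)
      qed
      then show ?thesis using B'(3) by (auto simp: pairwise_insert)
    qed
    show "\<forall>b\<in>insert v B'. norm b = 1 \<and> M *v b = (b \<bullet> (M *v b)) *\<^sub>R b"
      using B'(4) nv Mv l_def by auto
    show "span (insert v B') = W"
    proof
      show "span (insert v B') \<subseteq> W"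
        using \<open>insert v B' \<subseteq> W\<close> W by (simp add: span_minimal)
      show "W \<subseteq> span (insert v B')"
      proof
        fix y assume yW: "y \<in> W"
        define r where "r = y - (y \<bullet> v) *\<^sub>R v"
        have rW: "r \<in> W" using yW vW W by (simp add: r_def subspace_diff subspace_scale)
        have "orthogonal z r" if zs: "z \<in> span {v}" for z
        proof -
          obtain c where "z = c *\<^sub>R v" using zs by (auto simp: span_singleton)
          then show ?thesis
            by (simp add: orthogonal_def r_def inner_diff_right vv inner_commute)
        qed
        then have "r \<in> W'" using rW by (simp add: W'_def)
        then have "r \<in> span (insert v B')" using B'(5) by (metis span_mono subset_insertI subsetD)
        moreover have "(y \<bullet> v) *\<^sub>R v \<in> span (insert v B')" by (simp add: span_base span_scale)
        ultimately have "r + (y \<bullet> v) *\<^sub>R v \<in> span (insert v B')" by (rule span_add)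
        then show "y \<in> span (insert v B')" by (simp add: r_def)
      qed
    qed
  qed
qed

definition onb :: "(real^'n) set \<Rightarrow> bool" where
  "onb B \<longleftrightarrow> finite B \<and> pairwise orthogonal B \<and> (\<forall>b\<in>B. norm b = 1) \<and> span B = UNIV"

lemma onb_coeff:
  assumes "onb B" "b0 \<in> B"
  shows "b0 \<bullet> (\<Sum>b\<in>B. c b *\<^sub>R b) = c b0"
proof -
  have fin: "finite B" and po: "pairwise orthogonal B" and n1: "\<forall>b\<in>B. norm b = 1"
    using assms(1) by (auto simp: onb_def)
  have "b0 \<bullet> (\<Sum>b\<in>B. c b *\<^sub>R b) = (\<Sum>b\<in>B. c b * (b0 \<bullet> b))"
    by (simp add: inner_sum_right)
  also have "\<dots> = c b0 * (b0 \<bullet> b0) + (\<Sum>b\<in>B - {b0}. c b * (b0 \<bullet> b))"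
    using fin assms(2) by (simp add: sum.remove)
  also have "(\<Sum>b\<in>B - {b0}. c b * (b0 \<bullet> b)) = 0"
  proof (rule sum.neutral, rule ballI)
    fix b assume "b \<in> B - {b0}"
    then have "orthogonal b0 b" using po assms(2) by (auto simp: pairwise_def)
    then show "c b * (b0 \<bullet> b) = 0" by (simp add: orthogonal_def)
  qed
  also have "b0 \<bullet> b0 = 1" using n1 assms(2) by (simp add: norm_eq_1)
  finally show ?thesis by simp
qed

lemma onb_expand:
  assumes "onb B"
  shows "x = (\<Sum>b\<in>B. (b \<bullet> x) *\<^sub>R b)"
proof -
  define r where "r = x - (\<Sum>b\<in>B. (b \<bullet> x) *\<^sub>R b)"
  have "b \<bullet> r = 0" if "b \<in> B" for b
    using onb_coeff[OF assms that, of "\<lambda>b. b \<bullet> x"] by (simp add: r_def inner_diff_right)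
  then have o: "orthogonal r b" if "b \<in> B" for b using that by (simp add: orthogonal_def inner_commute)
  have rs: "r \<in> span B" using assms by (simp add: onb_def)
  have "orthogonal r r" using orthogonal_to_span[OF rs o] .
  then have "r = 0" by (simp add: orthogonal_def)
  then show ?thesis by (simp add: r_def)
qed

lemma onb_parseval:
  assumes "onb B"
  shows "x \<bullet> x = (\<Sum>b\<in>B. (b \<bullet> x)^2)"
proof -
  have "x \<bullet> x = x \<bullet> (\<Sum>b\<in>B. (b \<bullet> x) *\<^sub>R b)" using onb_expand[OF assms, of x] by simp
  also have "\<dots> = (\<Sum>b\<in>B. (b \<bullet> x)^2)"
    by (simp add: inner_sum_right power2_eq_square inner_commute)
  finally show ?thesis .
qed

definition mat_of :: "(real^'n) set \<Rightarrow> (real^'n \<Rightarrow> real) \<Rightarrow> real^'n^'n" where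
  "mat_of B h = (\<chi> i j. \<Sum>b\<in>B. h b * b$i * b$j)"

lemma mat_of_mult: "mat_of B h *v x = (\<Sum>b\<in>B. (h b * (b \<bullet> x)) *\<^sub>R b)"
proof -
  have "(mat_of B h *v x) $ i = (\<Sum>b\<in>B. (h b * (b \<bullet> x)) *\<^sub>R b) $ i" for i
  proof -
    have "(mat_of B h *v x) $ i = (\<Sum>j\<in>UNIV. \<Sum>b\<in>B. h b * b$i * b$j * x$j)"
      by (simp add: mat_of_def matrix_vector_mult_def sum_distrib_right)
    also have "\<dots> = (\<Sum>b\<in>B. \<Sum>j\<in>UNIV. h b * b$i * b$j * x$j)" by (rule sum.swap)
    also have "\<dots> = (\<Sum>b\<in>B. (h b * (b \<bullet> x)) * b $ i)"
      by (simp add: inner_vec_def sum_distrib_left sum_distrib_right algebra_simps)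
    also have "\<dots> = (\<Sum>b\<in>B. (h b * (b \<bullet> x)) *\<^sub>R b) $ i"
      by (simp add: sum_component)
    finally show ?thesis .
  qed
  then show ?thesis by (simp add: vec_eq_iff)
qed

lemma mat_of_sym: "transpose (mat_of B h) = mat_of B h"
  by (simp add: mat_of_def transpose_def vec_eq_iff mult.commute mult.left_commute)

lemma msqrt_facts:
  fixes M :: "real^'n^'n"
  assumes sym: "transpose M = M" and lm: "lambda_min M \<ge> a" and a: "a > 0"
  shows "transpose (msqrt M) = msqrt M \<and> msqrt M ** msqrt M = M \<and> invertible (msqrt M)
         \<and> (\<forall>x. a * (x \<bullet> x) \<le> x \<bullet> (M *v x))"
proof -
  obtain B where fin: "finite B" and po: "pairwise orthogonal B"
    and eig: "\<forall>b\<in>B. norm b = 1 \<and> M *v b = (b \<bullet> (M *v b)) *\<^sub>R b" and sp: "span B = UNIV"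
    using spectral_sub[OF sym, of UNIV "dim (UNIV :: (real^'n) set)"] by auto
  have onb: "onb B" using fin po eig sp by (simp add: onb_def)
  define lam where "lam b = b \<bullet> (M *v b)" for b
  have Mb: "M *v b = lam b *\<^sub>R b" if "b \<in> B" for b using eig that by (simp add: lam_def)
  have Mx: "M *v x = (\<Sum>b\<in>B. (lam b * (b \<bullet> x)) *\<^sub>R b)" for x
  proof -
    have "M *v x = M *v (\<Sum>b\<in>B. (b \<bullet> x) *\<^sub>R b)" by (rule arg_cong[OF onb_expand[OF onb]])
    also have "\<dots> = (\<Sum>b\<in>B. (lam b * (b \<bullet> x)) *\<^sub>R b)"
      by (auto simp: vec.sum matrix_vector_mult_scaleR Mb intro!: sum.cong)
    finally show ?thesis .
  qed
  define E where "E = {l. \<exists>v. v \<noteq> 0 \<and> M *v v = l *\<^sub>R v}"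
  have EB: "E \<subseteq> lam ` B"
  proof
    fix l assume "l \<in> E"
    then obtain v where v0: "v \<noteq> 0" and Mv: "M *v v = l *\<^sub>R v" by (auto simp: E_def)
    have "\<exists>b\<in>B. b \<bullet> v \<noteq> 0"
    proof (rule ccontr)
      assume "\<not> ?thesis"
      then have "(\<Sum>b\<in>B. (b \<bullet> v) *\<^sub>R b) = 0" by simp
      then have "v = 0" using onb_expand[OF onb, of v] by metis
      then show False using v0 by simp
    qed
    then obtain b where b: "b \<in> B" "b \<bullet> v \<noteq> 0" by blast
    have "b \<bullet> (M *v v) = lam b * (b \<bullet> v)"
      using sym_dot[OF sym, of b v] Mb[OF b(1)] by simp
    then have "l * (b \<bullet> v) = lam b * (b \<bullet> v)" using Mv by simp
    then have "l = lam b" using b(2) by simp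
    then show "l \<in> lam ` B" using b(1) by blast
  qed
  have finE: "finite E" using EB fin finite_surj by blast
  have lampos: "lam b \<ge> a" if b: "b \<in> B" for b
  proof -
    have "b \<noteq> 0" using eig b by auto
    then have "lam b \<in> E" using Mb[OF b] by (auto simp: E_def)
    then have "Min E \<le> lam b" using finE by simp
    then show ?thesis using lm by (simp add: lambda_min_def E_def)
  qed
  define c where "c b = sqrt (lam b)" for b
  have cpos: "c b > 0" if "b \<in> B" for b using lampos[OF that] a by (simp add: c_def)
  have cc: "c b * c b = lam b" if "b \<in> B" for b using lampos[OF that] a by (simp add: c_def)
  define S where "S = mat_of B c"
  have Sx: "S *v x = (\<Sum>b\<in>B. (c b * (b \<bullet> x)) *\<^sub>R b)" for x by (simp add: S_def mat_of_mult)
  have bS: "b \<bullet> (S *v x) = c b * (b \<bullet> x)" if "b \<in> B" for b x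
    unfolding Sx by (rule onb_coeff[OF onb that])
  have Ssym: "transpose S = S" by (simp add: S_def mat_of_sym)
  have Spsd: "\<forall>\<xi>. 0 \<le> \<xi> \<bullet> (S *v \<xi>)"
  proof
    fix \<xi>
    have "\<xi> \<bullet> (S *v \<xi>) = (\<Sum>b\<in>B. c b * (b \<bullet> \<xi>)^2)"
      by (simp add: Sx inner_sum_right power2_eq_square inner_commute mult.assoc)
    also have "\<dots> \<ge> 0" using cpos by (intro sum_nonneg) (simp add: less_imp_le)
    finally show "0 \<le> \<xi> \<bullet> (S *v \<xi>)" .
  qed
  have SS: "S ** S = M"
  proof -
    have "(S ** S) *v x = M *v x" for x
    proof -
      have "(S ** S) *v x = S *v (S *v x)" by (simp add: matrix_vector_mul_assoc)
      also have "\<dots> = (\<Sum>b\<in>B. (c b * (c b * (b \<bullet> x))) *\<^sub>R b)"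
        by (subst Sx) (simp add: bS)
      also have "\<dots> = M *v x" unfolding Mx
        by (intro sum.cong refl) (simp add: cc mult.assoc[symmetric])
      finally show ?thesis .
    qed
    then show ?thesis by (simp add: matrix_eq)
  qed
  have uniq: "T = S" if T: "transpose T = T \<and> (\<forall>\<xi>. 0 \<le> \<xi> \<bullet> (T *v \<xi>)) \<and> T ** T = M" for T
  proof -
    have Tb: "T *v b = c b *\<^sub>R b" if b: "b \<in> B" for b
    proof -
      define w where "w = T *v b - c b *\<^sub>R b"
      have TTb: "T *v (T *v b) = (c b * c b) *\<^sub>R b"
        using T Mb[OF b] cc[OF b] by (simp add: matrix_vector_mul_assoc)
      have "T *v w = - (c b *\<^sub>R w)"
        by (simp add: w_def matrix_vector_mult_diff_distrib matrix_vector_mult_scaleR TTb algebra_simps)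
      then have "w \<bullet> (T *v w) = - c b * (w \<bullet> w)" by simp
      moreover have "0 \<le> w \<bullet> (T *v w)" using T by blast
      ultimately have "c b * (w \<bullet> w) \<le> 0" by simp
      then have "w \<bullet> w \<le> 0" using cpos[OF b] by (simp add: mult_le_0_iff)
      then have "w \<bullet> w = 0" using inner_ge_zero[of w] by linarith
      then have "w = 0" by simp
      then show ?thesis by (simp add: w_def)
    qed
    have "T *v x = S *v x" for x
    proof -
      have "T *v x = T *v (\<Sum>b\<in>B. (b \<bullet> x) *\<^sub>R b)" by (rule arg_cong[OF onb_expand[OF onb]])
      also have "\<dots> = (\<Sum>b\<in>B. (c b * (b \<bullet> x)) *\<^sub>R b)"
        by (auto simp: vec.sum matrix_vector_mult_scaleR Tb intro!: sum.cong)
      finally show ?thesis by (simp add: Sx)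
    qed
    then show ?thesis by (simp add: matrix_eq)
  qed
  have ms: "msqrt M = S" unfolding msqrt_def
  proof (rule the_equality)
    show "transpose S = S \<and> (\<forall>\<xi>. 0 \<le> \<xi> \<bullet> (S *v \<xi>)) \<and> S ** S = M" using Ssym Spsd SS by blast
    show "\<And>T. transpose T = T \<and> (\<forall>\<xi>. 0 \<le> \<xi> \<bullet> (T *v \<xi>)) \<and> T ** T = M \<Longrightarrow> T = S" by (rule uniq)
  qed
  have inv: "invertible S"
  proof -
    define S' where "S' = mat_of B (\<lambda>b. 1 / c b)"
    have "(S' ** S) *v x = mat 1 *v x" for x
    proof -
      have "(S' ** S) *v x = S' *v (S *v x)" by (simp add: matrix_vector_mul_assoc)
      also have "\<dots> = (\<Sum>b\<in>B. (b \<bullet> x) *\<^sub>R b)"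
        unfolding S'_def mat_of_mult using cpos
        by (intro sum.cong refl) (simp add: bS less_imp_neq[symmetric])
      also have "\<dots> = x" by (rule onb_expand[OF onb, symmetric])
      finally show ?thesis by simp
    qed
    then have "S' ** S = mat 1" by (simp add: matrix_eq)
    then show ?thesis unfolding invertible_left_inverse by blast
  qed
  have pd: "a * (x \<bullet> x) \<le> x \<bullet> (M *v x)" for x
  proof -
    have "x \<bullet> (M *v x) = (\<Sum>b\<in>B. lam b * (b \<bullet> x)^2)"
      by (simp add: Mx inner_sum_right power2_eq_square inner_commute mult.assoc)
    moreover have "a * (x \<bullet> x) = (\<Sum>b\<in>B. a * (b \<bullet> x)^2)"
      by (simp add: onb_parseval[OF onb] sum_distrib_left)
    moreover have "(\<Sum>b\<in>B. a * (b \<bullet> x)^2) \<le> (\<Sum>b\<in>B. lam b * (b \<bullet> x)^2)"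
      using lampos by (intro sum_mono mult_right_mono) auto
    ultimately show ?thesis by simp
  qed
  show ?thesis unfolding ms using Ssym SS inv pd by blast
qed

definition cram :: "real^'n^'n \<Rightarrow> real^'n \<Rightarrow> real^'n" where
  "cram M s = (\<chi> k. det (\<chi> i j. if j = k then s$i else M$i$j) / det M)"

lemma flux_pt:
  fixes M :: "real^'n^'n"
  assumes sym: "transpose M = M" and lm: "lambda_min M \<ge> a" and a: "a > 0"
  shows "(msqrt M *v g - matrix_inv (msqrt M) *v s) \<bullet> (msqrt M *v g - matrix_inv (msqrt M) *v s)
           = g \<bullet> (M *v g) - 2 * (g \<bullet> s) + s \<bullet> cram M s"
    and "0 \<le> (msqrt M *v g - matrix_inv (msqrt M) *v s) \<bullet> (msqrt M *v g - matrix_inv (msqrt M) *v s) + 2 * (g \<bullet> s)"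
    and "s \<bullet> cram M s \<le> (s \<bullet> s) / a"
    and "0 \<le> s \<bullet> cram M s"
proof -
  define S where "S = msqrt M"
  have Ssym: "transpose S = S" and SS: "S ** S = M" and Sinv: "invertible S"
    and pd: "\<forall>x. a * (x \<bullet> x) \<le> x \<bullet> (M *v x)"
    using msqrt_facts[OF sym lm a] by (auto simp: S_def)
  define Si where "Si = matrix_inv S"
  have SSi: "S ** Si = mat 1" and SiS: "Si ** S = mat 1"
    using someI_ex[OF Sinv[unfolded invertible_def]] by (auto simp: Si_def matrix_inv_def)
  define y where "y = Si *v s"
  have Sy: "S *v y = s" by (simp add: y_def matrix_vector_mul_assoc SSi)
  have Minv: "invertible M" using SS Sinv invertible_mult by metis
  then have dM: "det M \<noteq> 0" by (simp add: invertible_det_nz)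
  define z where "z = cram M s"
  have Mz: "M *v z = s" using cramer[OF dM, of z s] by (simp add: z_def cram_def)
  have "S *v (S *v z) = S *v y" using Mz Sy SS by (simp add: matrix_vector_mul_assoc)
  moreover have cancel: "Si *v (S *v w) = w" for w by (simp add: matrix_vector_mul_assoc SiS)
  ultimately have Sz: "S *v z = y" by metis
  have d1: "(S *v g) \<bullet> (S *v g) = g \<bullet> (M *v g)"
    using sym_dot[OF Ssym, of g "S *v g"] SS by (simp add: matrix_vector_mul_assoc)
  have d2: "(S *v g) \<bullet> y = g \<bullet> s"
    using sym_dot[OF Ssym, of g y] Sy by simp
  have d3: "y \<bullet> y = s \<bullet> z"
    using sym_dot[OF Ssym, of z y] Sy Sz by (simp add: inner_commute)
  have F: "(S *v g - y) \<bullet> (S *v g - y) = (S *v g) \<bullet> (S *v g) - 2 * ((S *v g) \<bullet> y) + y \<bullet> y"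
    by (simp add: inner_diff_left inner_diff_right inner_commute)
  show "(msqrt M *v g - matrix_inv (msqrt M) *v s) \<bullet> (msqrt M *v g - matrix_inv (msqrt M) *v s)
           = g \<bullet> (M *v g) - 2 * (g \<bullet> s) + s \<bullet> cram M s"
    using F d1 d2 d3 by (simp add: S_def[symmetric] Si_def[symmetric] y_def[symmetric] z_def[symmetric])
  show "0 \<le> (msqrt M *v g - matrix_inv (msqrt M) *v s) \<bullet> (msqrt M *v g - matrix_inv (msqrt M) *v s) + 2 * (g \<bullet> s)"
    using F d2 by (simp add: S_def[symmetric] Si_def[symmetric] y_def[symmetric])
  have "y \<bullet> (M *v y) = y \<bullet> (S *v (S *v y))" using SS by (simp add: matrix_vector_mul_assoc)
  also have "\<dots> = (S *v y) \<bullet> (S *v y)" by (rule sym_dot[OF Ssym])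
  finally have "s \<bullet> s = y \<bullet> (M *v y)" using Sy by simp
  then have "a * (y \<bullet> y) \<le> s \<bullet> s" using pd by simp
  then show "s \<bullet> cram M s \<le> (s \<bullet> s) / a" using a d3 by (simp add: z_def field_simps mult.commute)
  have "0 \<le> y \<bullet> y" by simp
  then show "0 \<le> s \<bullet> cram M s" using d3 by (simp add: z_def)
qed

lemma abs_mult_le_sq: "\<bar>a * b\<bar> \<le> a * a + b * (b::real)"
proof -
  have "0 \<le> (\<bar>a\<bar> - \<bar>b\<bar>) * (\<bar>a\<bar> - \<bar>b\<bar>)" by simp
  then have "2 * \<bar>a\<bar> * \<bar>b\<bar> \<le> \<bar>a\<bar> * \<bar>a\<bar> + \<bar>b\<bar> * \<bar>b\<bar>" by (simp add: algebra_simps)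
  moreover have "\<bar>a\<bar> * \<bar>a\<bar> = a * a" "\<bar>b\<bar> * \<bar>b\<bar> = b * b" by (simp_all add: abs_mult_self_eq)
  moreover have "0 \<le> \<bar>a\<bar> * \<bar>b\<bar>" by simp
  moreover have "\<bar>a * b\<bar> = \<bar>a\<bar> * \<bar>b\<bar>" by (rule abs_mult)
  ultimately show ?thesis by linarith
qed

lemma L2_meas: "L2 \<Omega> f \<Longrightarrow> f \<in> borel_measurable (lebesgue_on \<Omega>)"
  by (simp add: L2_def)

lemma L2_int_sq: "L2 \<Omega> f \<Longrightarrow> integrable (lebesgue_on \<Omega>) (\<lambda>x. f x * f x)"
  by (simp add: L2_def power2_eq_square)

lemma L2I: "f \<in> borel_measurable (lebesgue_on \<Omega>) \<Longrightarrow> integrable (lebesgue_on \<Omega>) (\<lambda>x. f x * f x) \<Longrightarrow> L2 \<Omega> f"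
  by (simp add: L2_def power2_eq_square)

lemma L2_prod: "L2 \<Omega> f \<Longrightarrow> L2 \<Omega> g \<Longrightarrow> integrable (lebesgue_on \<Omega>) (\<lambda>x. f x * g x)"
proof -
  assume f: "L2 \<Omega> f" and g: "L2 \<Omega> g"
  have i: "integrable (lebesgue_on \<Omega>) (\<lambda>x. f x * f x + g x * g x)"
    using L2_int_sq[OF f] L2_int_sq[OF g] by simp
  have m: "(\<lambda>x. f x * g x) \<in> borel_measurable (lebesgue_on \<Omega>)"
    using L2_meas[OF f] L2_meas[OF g] by simp
  have ae: "AE x in lebesgue_on \<Omega>. norm (f x * g x) \<le> norm (f x * f x + g x * g x)"
  proof (intro AE_I2)
    fix x
    have "0 \<le> f x * f x + g x * g x" by simp
    then have "norm (f x * f x + g x * g x) = f x * f x + g x * g x" by simp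
    then show "norm (f x * g x) \<le> norm (f x * f x + g x * g x)" using abs_mult_le_sq[of "f x" "g x"] by simp
  qed
  show ?thesis by (rule Bochner_Integration.integrable_bound[OF i m ae])
qed

lemma L2_add: "L2 \<Omega> f \<Longrightarrow> L2 \<Omega> g \<Longrightarrow> L2 \<Omega> (\<lambda>x. f x + g x)"
proof (rule L2I)
  assume f: "L2 \<Omega> f" and g: "L2 \<Omega> g"
  show "(\<lambda>x. f x + g x) \<in> borel_measurable (lebesgue_on \<Omega>)" using L2_meas[OF f] L2_meas[OF g] by simp
  have "integrable (lebesgue_on \<Omega>) (\<lambda>x. f x * f x + 2 * (f x * g x) + g x * g x)"
    using L2_int_sq[OF f] L2_int_sq[OF g] L2_prod[OF f g] by simp
  then show "integrable (lebesgue_on \<Omega>) (\<lambda>x. (f x + g x) * (f x + g x))"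
    by (simp add: algebra_simps)
qed

lemma L2_cmult: "L2 \<Omega> f \<Longrightarrow> L2 \<Omega> (\<lambda>x. c * f x)"
proof (rule L2I)
  assume f: "L2 \<Omega> f"
  show "(\<lambda>x. c * f x) \<in> borel_measurable (lebesgue_on \<Omega>)" using L2_meas[OF f] by simp
  have "integrable (lebesgue_on \<Omega>) (\<lambda>x. (c * c) * (f x * f x))"
    using L2_int_sq[OF f] by simp
  then show "integrable (lebesgue_on \<Omega>) (\<lambda>x. (c * f x) * (c * f x))"
    by (simp add: algebra_simps)
qed

lemma L2_diff: "L2 \<Omega> f \<Longrightarrow> L2 \<Omega> g \<Longrightarrow> L2 \<Omega> (\<lambda>x. f x - g x)"
  using L2_add[of \<Omega> f "\<lambda>x. (-1) * g x"] L2_cmult[of \<Omega> g "-1"] by simp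

lemma L2_zero: "L2 \<Omega> (\<lambda>x. 0)"
  by (simp add: L2_def)

lemma L2_bdd_mult:
  assumes f: "L2 \<Omega> f" and h: "h \<in> borel_measurable (lebesgue_on \<Omega>)"
    and C: "AE x in lebesgue_on \<Omega>. \<bar>h x\<bar> \<le> C"
  shows "L2 \<Omega> (\<lambda>x. h x * f x)"
proof (rule L2I)
  show "(\<lambda>x. h x * f x) \<in> borel_measurable (lebesgue_on \<Omega>)" using L2_meas[OF f] h by simp
  have "integrable (lebesgue_on \<Omega>) (\<lambda>x. (C * C) * (f x * f x))" using L2_int_sq[OF f] by simp
  moreover have "(\<lambda>x. (h x * f x) * (h x * f x)) \<in> borel_measurable (lebesgue_on \<Omega>)"
    using L2_meas[OF f] h by simp
  moreover have "AE x in lebesgue_on \<Omega>. norm ((h x * f x) * (h x * f x)) \<le> norm ((C * C) * (f x * f x))"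
    using C
  proof (rule AE_mp, intro AE_I2 impI)
    fix x assume hx: "\<bar>h x\<bar> \<le> C"
    have C0: "0 \<le> C" using hx abs_ge_zero order.trans by blast
    have "\<bar>h x\<bar> * \<bar>h x\<bar> \<le> C * C" using hx C0 by (intro mult_mono) auto
    then have "h x * h x \<le> C * C" by (simp add: abs_mult_self_eq)
    then have le: "(h x * h x) * (f x * f x) \<le> (C * C) * (f x * f x)" by (intro mult_right_mono) auto
    have "0 \<le> (h x * h x) * (f x * f x)" by simp
    moreover have "(h x * f x) * (h x * f x) = (h x * h x) * (f x * f x)" by (simp add: algebra_simps)
    ultimately have n1: "norm ((h x * f x) * (h x * f x)) = (h x * h x) * (f x * f x)" by simp
    then have n2: "norm ((C * C) * (f x * f x)) = (C * C) * (f x * f x)" using le by simp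
    show "norm ((h x * f x) * (h x * f x)) \<le> norm ((C * C) * (f x * f x))"
      unfolding n1 n2 by (rule le)
  qed
  ultimately show "integrable (lebesgue_on \<Omega>) (\<lambda>x. (h x * f x) * (h x * f x))" by (rule Bochner_Integration.integrable_bound)
qed

lemma ip_self_nonneg: "0 \<le> ip \<Omega> f f"
proof -
  have "AE x in lebesgue_on \<Omega>. 0 \<le> f x * f x" by (intro AE_I2) simp
  then show ?thesis unfolding ip_def by (rule integral_nonneg_AE)
qed

lemma nrm_nonneg: "0 \<le> nrm \<Omega> f"
  using ip_self_nonneg[of \<Omega> f] by (simp add: nrm_def)

lemma nrm_sq: "(nrm \<Omega> f)^2 = ip \<Omega> f f"
  using ip_self_nonneg[of \<Omega> f] by (simp add: nrm_def)

lemma ip_comm: "ip \<Omega> f g = ip \<Omega> g f"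
  by (simp add: ip_def mult.commute)

lemma discr:
  fixes a b c :: real
  assumes "a \<ge> 0" "c \<ge> 0" "\<forall>t. 0 \<le> a + 2*t*b + t^2*c"
  shows "b^2 \<le> a * c"
proof (cases "c = 0")
  case True
  have "b = 0"
  proof (rule ccontr)
    assume "b \<noteq> 0"
    have "0 \<le> a + 2*(-(a+1)/(2*b))*b + (-(a+1)/(2*b))^2*c" using assms(3) by blast
    also have "\<dots> = -1" using True \<open>b \<noteq> 0\<close> by (simp add: field_simps)
    finally show False by simp
  qed
  then show ?thesis using assms by simp
next
  case False
  then have c: "c > 0" using assms by simp
  have "0 \<le> a + 2*(-b/c)*b + (-b/c)^2*c" using assms(3) by blast
  also have "\<dots> = a - b^2/c" using c by (simp add: field_simps power2_eq_square)
  finally show ?thesis using c by (simp add: field_simps)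
qed

lemma ip_CS:
  assumes f: "L2 \<Omega> f" and g: "L2 \<Omega> g"
  shows "\<bar>ip \<Omega> f g\<bar> \<le> nrm \<Omega> f * nrm \<Omega> g"
proof -
  let ?M = "lebesgue_on \<Omega>"
  have q: "0 \<le> ip \<Omega> f f + 2*t*ip \<Omega> f g + t^2 * ip \<Omega> g g" for t
  proof -
    have "0 \<le> ip \<Omega> (\<lambda>x. f x + t * g x) (\<lambda>x. f x + t * g x)" by (rule ip_self_nonneg)
    also have "ip \<Omega> (\<lambda>x. f x + t * g x) (\<lambda>x. f x + t * g x)
        = (\<integral>x. f x * f x + (2*t) * (f x * g x) + t^2 * (g x * g x) \<partial>?M)"
      unfolding ip_def by (intro Bochner_Integration.integral_cong refl) (simp add: algebra_simps power2_eq_square)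
    also have "\<dots> = ip \<Omega> f f + 2*t*ip \<Omega> f g + t^2 * ip \<Omega> g g"
      using L2_int_sq[OF f] L2_int_sq[OF g] L2_prod[OF f g] by (simp add: ip_def)
    finally show ?thesis .
  qed
  have "(ip \<Omega> f g)^2 \<le> ip \<Omega> f f * ip \<Omega> g g"
    using discr[OF ip_self_nonneg ip_self_nonneg] q by blast
  then have "sqrt ((ip \<Omega> f g)^2) \<le> sqrt (ip \<Omega> f f * ip \<Omega> g g)" by (rule real_sqrt_le_mono)
  then show ?thesis by (simp add: nrm_def real_sqrt_mult)
qed

lemma nrm_triangle:
  assumes f: "L2 \<Omega> f" and g: "L2 \<Omega> g"
  shows "nrm \<Omega> (\<lambda>x. f x + g x) \<le> nrm \<Omega> f + nrm \<Omega> g"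
proof -
  let ?M = "lebesgue_on \<Omega>"
  have "(nrm \<Omega> (\<lambda>x. f x + g x))^2 = ip \<Omega> f f + 2 * ip \<Omega> f g + ip \<Omega> g g"
  proof -
    have "(nrm \<Omega> (\<lambda>x. f x + g x))^2 = (\<integral>x. f x * f x + 2 * (f x * g x) + g x * g x \<partial>?M)"
      unfolding nrm_sq ip_def by (intro Bochner_Integration.integral_cong refl) (simp add: algebra_simps)
    also have "\<dots> = ip \<Omega> f f + 2 * ip \<Omega> f g + ip \<Omega> g g"
      using L2_int_sq[OF f] L2_int_sq[OF g] L2_prod[OF f g] by (simp add: ip_def)
    finally show ?thesis .
  qed
  also have "\<dots> \<le> (nrm \<Omega> f)^2 + 2 * (nrm \<Omega> f * nrm \<Omega> g) + (nrm \<Omega> g)^2"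
    using ip_CS[OF f g] by (simp add: nrm_sq)
  also have "\<dots> = (nrm \<Omega> f + nrm \<Omega> g)^2" by (simp add: power2_eq_square algebra_simps)
  finally show ?thesis
    using nrm_nonneg[of \<Omega> f] nrm_nonneg[of \<Omega> g] power2_le_imp_le by (metis add_nonneg_nonneg)
qed

lemma nrm_cmult: "nrm \<Omega> (\<lambda>x. c * f x) = \<bar>c\<bar> * nrm \<Omega> f"
proof -
  have "ip \<Omega> (\<lambda>x. c * f x) (\<lambda>x. c * f x) = (c * c) * ip \<Omega> f f"
    unfolding ip_def by (simp add: algebra_simps)
  then show ?thesis by (simp add: nrm_def real_sqrt_mult)
qed

lemma ip_split3:
  assumes a: "L2 \<Omega> a" and b: "L2 \<Omega> b" and a': "L2 \<Omega> a'" and b': "L2 \<Omega> b'"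
  shows "ip \<Omega> a' b' - ip \<Omega> a b = ip \<Omega> (\<lambda>x. a' x - a x) (\<lambda>x. b' x - b x)
            + ip \<Omega> (\<lambda>x. a' x - a x) b + ip \<Omega> a (\<lambda>x. b' x - b x)"
proof -
  let ?M = "lebesgue_on \<Omega>"
  have da: "L2 \<Omega> (\<lambda>x. a' x - a x)" and db: "L2 \<Omega> (\<lambda>x. b' x - b x)"
    using L2_diff a b a' b' by auto
  have "ip \<Omega> (\<lambda>x. a' x - a x) (\<lambda>x. b' x - b x) + ip \<Omega> (\<lambda>x. a' x - a x) b + ip \<Omega> a (\<lambda>x. b' x - b x)
      = (\<integral>x. (a' x - a x) * (b' x - b x) + (a' x - a x) * b x + a x * (b' x - b x) \<partial>?M)"
    unfolding ip_def using L2_prod[OF da db] L2_prod[OF da b] L2_prod[OF a db] by simp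
  also have "\<dots> = (\<integral>x. a' x * b' x - a x * b x \<partial>?M)"
    by (intro Bochner_Integration.integral_cong refl) (simp add: algebra_simps)
  also have "\<dots> = ip \<Omega> a' b' - ip \<Omega> a b"
    unfolding ip_def using L2_prod[OF a' b'] L2_prod[OF a b] by simp
  finally show ?thesis by simp
qed

lemma L2_prod_conv:
  assumes a: "L2 \<Omega> a" and b: "L2 \<Omega> b" and an: "\<And>n. L2 \<Omega> (an n)" and bn: "\<And>n. L2 \<Omega> (bn n)"
    and ca: "(\<lambda>n. ip \<Omega> (\<lambda>x. an n x - a x) (\<lambda>x. an n x - a x)) \<longlonglongrightarrow> 0"
    and cb: "(\<lambda>n. ip \<Omega> (\<lambda>x. bn n x - b x) (\<lambda>x. bn n x - b x)) \<longlonglongrightarrow> 0"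
  shows "(\<lambda>n. ip \<Omega> (an n) (bn n)) \<longlonglongrightarrow> ip \<Omega> a b"
proof -
  define ea where "ea n = nrm \<Omega> (\<lambda>x. an n x - a x)" for n
  define eb where "eb n = nrm \<Omega> (\<lambda>x. bn n x - b x)" for n
  have ea0: "ea \<longlonglongrightarrow> 0" unfolding ea_def nrm_def using tendsto_real_sqrt[OF ca] by simp
  have eb0: "eb \<longlonglongrightarrow> 0" unfolding eb_def nrm_def using tendsto_real_sqrt[OF cb] by simp
  define g where "g n = ea n * eb n + ea n * nrm \<Omega> b + nrm \<Omega> a * eb n" for n
  have g0: "g \<longlonglongrightarrow> 0" unfolding g_def
    using ea0 eb0 by (auto intro!: tendsto_eq_intros)
  have bound: "norm (ip \<Omega> (an n) (bn n) - ip \<Omega> a b) \<le> g n" for n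
  proof -
    have da: "L2 \<Omega> (\<lambda>x. an n x - a x)" by (rule L2_diff[OF an a])
    have db: "L2 \<Omega> (\<lambda>x. bn n x - b x)" by (rule L2_diff[OF bn b])
    have "norm (ip \<Omega> (an n) (bn n) - ip \<Omega> a b)
        \<le> \<bar>ip \<Omega> (\<lambda>x. an n x - a x) (\<lambda>x. bn n x - b x)\<bar> + \<bar>ip \<Omega> (\<lambda>x. an n x - a x) b\<bar>
          + \<bar>ip \<Omega> a (\<lambda>x. bn n x - b x)\<bar>"
      unfolding ip_split3[OF a b an bn] by simp
    also have "\<dots> \<le> g n" unfolding g_def ea_def eb_def
      using ip_CS[OF da db] ip_CS[OF da b] ip_CS[OF a db] by linarith
    finally show ?thesis .
  qed
  have "(\<lambda>n. ip \<Omega> (an n) (bn n) - ip \<Omega> a b) \<longlonglongrightarrow> 0"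
    by (rule Lim_null_comparison[OF _ g0]) (use bound in \<open>auto intro: always_eventually\<close>)
  then show ?thesis by (rule LIM_zero_cancel)
qed

lemma nrm_to_ip:
  assumes "(\<lambda>n. nrm \<Omega> (f n)) \<longlonglongrightarrow> 0"
  shows "(\<lambda>n. ip \<Omega> (f n) (f n)) \<longlonglongrightarrow> 0"
proof -
  have "(\<lambda>n. (nrm \<Omega> (f n))^2) \<longlonglongrightarrow> 0^2" by (intro tendsto_power assms)
  then show ?thesis by (simp add: nrm_sq)
qed

lemma meas_AE_on:
  fixes f h :: "real^'d \<Rightarrow> real"
  assumes S: "S \<in> sets lebesgue" and h: "h \<in> borel_measurable (lebesgue_on S)"
    and ae: "AE x in lebesgue_on S. h x = f x"
  shows "f \<in> borel_measurable (lebesgue_on S)"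
proof -
  have h': "(\<lambda>x. if x \<in> S then h x else 0) \<in> borel_measurable lebesgue"
    using borel_measurable_if[OF S] h by blast
  have "AE x in lebesgue. x \<in> S \<longrightarrow> h x = f x"
    using ae S by (simp add: AE_restrict_space_iff)
  then have "AE x in lebesgue. (if x \<in> S then h x else 0) = (if x \<in> S then f x else 0)"
    by eventually_elim auto
  then have "(\<lambda>x. if x \<in> S then f x else 0) \<in> borel_measurable lebesgue"
    by (rule borel_measurable_AE[OF h'])
  then show ?thesis using borel_measurable_if[OF S] by blast
qed

lemma det_meas:
  fixes M :: "'a \<Rightarrow> real^'n^'n"
  assumes "\<And>i j. (\<lambda>x. M x $ i $ j) \<in> borel_measurable N"
  shows "(\<lambda>x. det (M x)) \<in> borel_measurable N"
  unfolding det_def using assms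
  by (intro borel_measurable_sum borel_measurable_times borel_measurable_prod borel_measurable_const) auto

definition pd :: "(real^'d::finite \<Rightarrow> real) \<Rightarrow> 'd \<Rightarrow> real^'d \<Rightarrow> real" where
  "pd \<phi> i = (\<lambda>x. frechet_derivative \<phi> (at x) (axis i 1))"

lemma Ck_Suc: "Ck (Suc k) \<phi> = ((\<forall>x. \<phi> differentiable (at x)) \<and> (\<forall>i. Ck k (pd \<phi> i)))"
  by (simp add: pd_def)

declare Ck.simps(2)[simp del]

lemma Ck_cont: "Ck k \<phi> \<Longrightarrow> continuous_on UNIV \<phi>"
proof (cases k)
  case 0
  then show "Ck k \<phi> \<Longrightarrow> ?thesis" by simp
next
  case (Suc m)
  assume "Ck k \<phi>"
  then have "\<forall>x. \<phi> differentiable (at x)" using Suc by (simp add: Ck_Suc)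
  then show ?thesis
    by (intro continuous_at_imp_continuous_on ballI differentiable_imp_continuous_within) auto
qed

lemma Ck_down: "Ck (Suc k) \<phi> \<Longrightarrow> Ck k \<phi>"
proof (induction k arbitrary: \<phi>)
  case 0
  then show ?case using Ck_cont[OF 0] by simp
next
  case (Suc k)
  then show ?case unfolding Ck_Suc by blast
qed

lemma fd_add:
  assumes "f differentiable (at x)" "g differentiable (at x)"
  shows "frechet_derivative (\<lambda>x. f x + g x) (at x) = (\<lambda>h. frechet_derivative f (at x) h + frechet_derivative g (at x) h)"
proof -
  have "((\<lambda>x. f x + g x) has_derivative (\<lambda>h. frechet_derivative f (at x) h + frechet_derivative g (at x) h)) (at x)"
    using assms by (intro has_derivative_add) (simp_all add: frechet_derivative_works[symmetric])
  then show ?thesis by (rule frechet_derivative_at[symmetric])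
qed

lemma fd_mult:
  fixes f g :: "'a::real_normed_vector \<Rightarrow> real"
  assumes "f differentiable (at x)" "g differentiable (at x)"
  shows "frechet_derivative (\<lambda>x. f x * g x) (at x) = (\<lambda>h. f x * frechet_derivative g (at x) h + frechet_derivative f (at x) h * g x)"
proof -
  have "((\<lambda>x. f x * g x) has_derivative (\<lambda>h. f x * frechet_derivative g (at x) h + frechet_derivative f (at x) h * g x)) (at x)"
    using assms by (intro has_derivative_mult) (simp_all add: frechet_derivative_works[symmetric])
  then show ?thesis by (rule frechet_derivative_at[symmetric])
qed

lemma Ck_add: "Ck k \<phi> \<Longrightarrow> Ck k \<psi> \<Longrightarrow> Ck k (\<lambda>x. \<phi> x + \<psi> x)"
proof (induction k arbitrary: \<phi> \<psi>)
  case 0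
  then show ?case by (simp add: continuous_on_add)
next
  case (Suc k)
  have d1: "\<forall>x. \<phi> differentiable (at x)" and d2: "\<forall>x. \<psi> differentiable (at x)"
    using Suc.prems by (auto simp: Ck_Suc)
  have "pd (\<lambda>x. \<phi> x + \<psi> x) i = (\<lambda>x. pd \<phi> i x + pd \<psi> i x)" for i
    using d1 d2 by (simp add: pd_def fd_add)
  moreover have "Ck k (pd \<phi> i)" "Ck k (pd \<psi> i)" for i using Suc.prems by (auto simp: Ck_Suc)
  ultimately show ?case using d1 d2 Suc.IH by (simp add: Ck_Suc differentiable_add)
qed

lemma Ck_mult: "Ck k \<phi> \<Longrightarrow> Ck k \<psi> \<Longrightarrow> Ck k (\<lambda>x. \<phi> x * \<psi> x)"
proof (induction k arbitrary: \<phi> \<psi>)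
  case 0
  then show ?case by (simp add: continuous_on_mult)
next
  case (Suc k)
  have d1: "\<forall>x. \<phi> differentiable (at x)" and d2: "\<forall>x. \<psi> differentiable (at x)"
    using Suc.prems by (auto simp: Ck_Suc)
  have pdm: "pd (\<lambda>x. \<phi> x * \<psi> x) i = (\<lambda>x. \<phi> x * pd \<psi> i x + pd \<phi> i x * \<psi> x)" for i
    using d1 d2 by (simp add: pd_def fd_mult)
  have p1: "Ck k (pd \<phi> i)" and p2: "Ck k (pd \<psi> i)" for i using Suc.prems by (auto simp: Ck_Suc)
  have c1: "Ck k \<phi>" and c2: "Ck k \<psi>" using Suc.prems Ck_down by blast+
  have "Ck k (pd (\<lambda>x. \<phi> x * \<psi> x) i)" for i
    unfolding pdm by (intro Ck_add Suc.IH c1 c2 p1 p2)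
  then show ?case using d1 d2 by (simp add: Ck_Suc differentiable_mult)
qed

lemma test_sq: "test_fun \<Omega> \<phi> \<Longrightarrow> test_fun \<Omega> (\<lambda>x. \<phi> x * \<phi> x)"
  unfolding test_fun_def by (auto intro: Ck_mult)

lemma test_diff: "test_fun \<Omega> \<phi> \<Longrightarrow> \<phi> differentiable (at x)"
  unfolding test_fun_def by (metis Ck_Suc)

lemma cgrad_sq:
  assumes "test_fun \<Omega> \<phi>"
  shows "cgrad (\<lambda>x. \<phi> x * \<phi> x) x = (2 * \<phi> x) *\<^sub>R cgrad \<phi> x"
  using test_diff[OF assms, of x]
  by (simp add: cgrad_def fd_mult vec_eq_iff)

lemma test_cont: "test_fun \<Omega> \<phi> \<Longrightarrow> continuous_on UNIV \<phi>"
  unfolding test_fun_def using Ck_cont by blast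

lemma test_pd_cont: "test_fun \<Omega> \<phi> \<Longrightarrow> continuous_on UNIV (\<lambda>x. cgrad \<phi> x $ i)"
proof -
  assume t: "test_fun \<Omega> \<phi>"
  then have "Ck (Suc 0) \<phi>" by (simp add: test_fun_def)
  then have "Ck 0 (pd \<phi> i)" by (simp only: Ck_Suc)
  then show ?thesis by (simp add: cgrad_def pd_def)
qed

lemma test_zero:
  assumes t: "test_fun \<Omega> \<phi>" and x: "x \<notin> closure {x. \<phi> x \<noteq> 0}"
  shows "\<phi> x = 0" "cgrad \<phi> x $ i = 0"
proof -
  have cs: "{x. \<phi> x \<noteq> 0} \<subseteq> closure {x. \<phi> x \<noteq> 0}" by (rule closure_subset)
  show "\<phi> x = 0" using x cs by auto
  let ?U = "- closure {x. \<phi> x \<noteq> 0}"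
  have U: "open ?U" "x \<in> ?U" using x by auto
  have z: "(\<lambda>y. 0) y = \<phi> y" if "y \<in> ?U" for y using that cs by auto
  have "((\<lambda>y. 0::real) has_derivative (\<lambda>h. 0)) (at x)" by (rule has_derivative_const)
  then have "(\<phi> has_derivative (\<lambda>h. 0)) (at x)"
    by (rule has_derivative_transform_within_open[OF _ U z])
  then have "frechet_derivative \<phi> (at x) = (\<lambda>h. 0)" by (rule frechet_derivative_at[symmetric])
  then show "cgrad \<phi> x $ i = 0" by (simp add: cgrad_def)
qed

lemma bdd_of:
  fixes f :: "'a::topological_space \<Rightarrow> real"
  assumes "continuous_on UNIV f" "compact K" "\<And>x. x \<notin> K \<Longrightarrow> f x = 0"
  shows "\<exists>B. \<forall>x. \<bar>f x\<bar> \<le> B"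
proof -
  have "compact (f ` K)" using assms(1,2) continuous_on_subset[OF assms(1)] compact_continuous_image
    by blast
  then have "bounded (f ` K)" by (rule compact_imp_bounded)
  then obtain B where B: "\<forall>y\<in>f ` K. norm y \<le> B" unfolding bounded_iff by blast
  have "\<bar>f x\<bar> \<le> max B 0" for x
    using B assms(3)[of x] by (cases "x \<in> K") (auto simp: le_max_iff_disj)
  then show ?thesis by blast
qed

lemma L2_cont_bdd:
  assumes c: "continuous_on UNIV f" and B: "\<And>x. \<bar>f x\<bar> \<le> B" and \<Omega>: "\<Omega> \<in> lmeasurable"
  shows "L2 \<Omega> f"
proof (rule L2I)
  have S: "\<Omega> \<in> sets lebesgue" using \<Omega> by (simp add: fmeasurableD)
  show m: "f \<in> borel_measurable (lebesgue_on \<Omega>)"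
    using continuous_imp_measurable_on_sets_lebesgue[OF continuous_on_subset[OF c] S] by simp
  interpret finite_measure "lebesgue_on \<Omega>" using finite_measure_lebesgue_on[OF \<Omega>] .
  have "AE x in lebesgue_on \<Omega>. norm (f x * f x) \<le> B * B"
  proof (intro AE_I2)
    fix x
    have B0: "0 \<le> B" using B[of x] abs_ge_zero[of "f x"] by linarith
    have "\<bar>f x\<bar> * \<bar>f x\<bar> \<le> B * B" using B[of x] B0 by (intro mult_mono) auto
    then show "norm (f x * f x) \<le> B * B" by (simp add: abs_mult)
  qed
  then show "integrable (lebesgue_on \<Omega>) (\<lambda>x. f x * f x)"
    using m by (intro integrable_const_bound) auto
qed

lemma test_L2:
  assumes t: "test_fun \<Omega> \<phi>" and \<Omega>: "\<Omega> \<in> lmeasurable"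
  shows "L2 \<Omega> \<phi>" "L2 \<Omega> (\<lambda>x. cgrad \<phi> x $ i)"
proof -
  let ?K = "closure {x. \<phi> x \<noteq> 0}"
  have K: "compact ?K" using t by (simp add: test_fun_def)
  obtain B where "\<forall>x. \<bar>\<phi> x\<bar> \<le> B"
    using bdd_of[OF test_cont[OF t] K] test_zero[OF t] by blast
  then show "L2 \<Omega> \<phi>" using L2_cont_bdd[OF test_cont[OF t] _ \<Omega>] by blast
  obtain B' where "\<forall>x. \<bar>cgrad \<phi> x $ i\<bar> \<le> B'"
    using bdd_of[OF test_pd_cont[OF t] K] test_zero[OF t] by blast
  then show "L2 \<Omega> (\<lambda>x. cgrad \<phi> x $ i)" using L2_cont_bdd[OF test_pd_cont[OF t] _ \<Omega>] by blast
qed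

lemma L2_sum: "finite S \<Longrightarrow> (\<And>i. i \<in> S \<Longrightarrow> L2 \<Omega> (f i)) \<Longrightarrow> L2 \<Omega> (\<lambda>x. \<Sum>i\<in>S. f i x)"
proof (induction S rule: finite_induct)
  case empty
  then show ?case using L2_zero by simp
next
  case (insert a S)
  then show ?case using L2_add[of \<Omega> "f a" "\<lambda>x. \<Sum>i\<in>S. f i x"] by simp
qed

lemma ipv_split:
  assumes v: "L2v \<Omega> v" and w: "L2v \<Omega> w"
  shows "integrable (lebesgue_on \<Omega>) (\<lambda>x. v x \<bullet> w x)"
    and "ipv \<Omega> v w = (\<Sum>i\<in>UNIV. ip \<Omega> (\<lambda>x. v x $ i) (\<lambda>x. w x $ i))"
proof -
  have i: "integrable (lebesgue_on \<Omega>) (\<lambda>x. v x $ i * w x $ i)" for i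
    using v w by (intro L2_prod) (auto simp: L2v_def)
  show "integrable (lebesgue_on \<Omega>) (\<lambda>x. v x \<bullet> w x)"
    unfolding inner_vec_def using i by simp
  show "ipv \<Omega> v w = (\<Sum>i\<in>UNIV. ip \<Omega> (\<lambda>x. v x $ i) (\<lambda>x. w x $ i))"
    unfolding ipv_def ip_def inner_vec_def using i by (simp add: integral_sum)
qed

lemma ip_comp_le:
  assumes v: "L2v \<Omega> v"
  shows "ip \<Omega> (\<lambda>x. v x $ i) (\<lambda>x. v x $ i) \<le> ipv \<Omega> v v"
  unfolding ipv_split(2)[OF v v]
  by (rule member_le_sum) (auto intro: ip_self_nonneg)

lemma ipv_self_nonneg: "0 \<le> ipv \<Omega> v v"
proof -
  have "AE x in lebesgue_on \<Omega>. 0 \<le> v x \<bullet> v x" by (intro AE_I2) simp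
  then show ?thesis unfolding ipv_def by (rule integral_nonneg_AE)
qed

lemma L2v_diff: "L2v \<Omega> v \<Longrightarrow> L2v \<Omega> w \<Longrightarrow> L2v \<Omega> (\<lambda>x. v x - w x)"
  unfolding L2v_def by (simp add: L2_diff)

lemma bdd_conv:
  assumes h: "h \<in> borel_measurable (lebesgue_on \<Omega>)" and C: "AE x in lebesgue_on \<Omega>. \<bar>h x\<bar> \<le> C"
    and a: "L2 \<Omega> a" and an: "\<And>n. L2 \<Omega> (an n)"
    and c: "(\<lambda>n. ip \<Omega> (\<lambda>x. an n x - a x) (\<lambda>x. an n x - a x)) \<longlonglongrightarrow> 0"
  shows "(\<lambda>n. ip \<Omega> (\<lambda>x. h x * an n x - h x * a x) (\<lambda>x. h x * an n x - h x * a x)) \<longlonglongrightarrow> 0"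
proof -
  have bnd: "norm (ip \<Omega> (\<lambda>x. h x * an n x - h x * a x) (\<lambda>x. h x * an n x - h x * a x))
      \<le> (C * C) * ip \<Omega> (\<lambda>x. an n x - a x) (\<lambda>x. an n x - a x)" for n
  proof -
    have d: "L2 \<Omega> (\<lambda>x. an n x - a x)" by (rule L2_diff[OF an a])
    have hd: "L2 \<Omega> (\<lambda>x. h x * (an n x - a x))" by (rule L2_bdd_mult[OF d h C])
    have eq: "ip \<Omega> (\<lambda>x. h x * an n x - h x * a x) (\<lambda>x. h x * an n x - h x * a x)
        = ip \<Omega> (\<lambda>x. h x * (an n x - a x)) (\<lambda>x. h x * (an n x - a x))"
      by (simp add: algebra_simps)
    have "ip \<Omega> (\<lambda>x. h x * (an n x - a x)) (\<lambda>x. h x * (an n x - a x))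
        \<le> (\<integral>x. (C * C) * ((an n x - a x) * (an n x - a x)) \<partial>lebesgue_on \<Omega>)"
      unfolding ip_def
    proof (rule integral_mono_AE)
      show "integrable (lebesgue_on \<Omega>) (\<lambda>x. h x * (an n x - a x) * (h x * (an n x - a x)))"
        using L2_int_sq[OF hd] .
      show "integrable (lebesgue_on \<Omega>) (\<lambda>x. C * C * ((an n x - a x) * (an n x - a x)))"
        using L2_int_sq[OF d] by simp
      show "AE x in lebesgue_on \<Omega>. h x * (an n x - a x) * (h x * (an n x - a x)) \<le> C * C * ((an n x - a x) * (an n x - a x))"
        using C
      proof (rule AE_mp, intro AE_I2 impI)
        fix x assume hx: "\<bar>h x\<bar> \<le> C"
        have C0: "0 \<le> C" using hx abs_ge_zero[of "h x"] by linarith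
        have "\<bar>h x\<bar> * \<bar>h x\<bar> \<le> C * C" using hx C0 by (intro mult_mono) auto
        then have "h x * h x \<le> C * C" by (simp add: abs_mult_self_eq)
        then have "(h x * h x) * ((an n x - a x) * (an n x - a x)) \<le> (C * C) * ((an n x - a x) * (an n x - a x))"
          by (intro mult_right_mono) auto
        then show "h x * (an n x - a x) * (h x * (an n x - a x)) \<le> C * C * ((an n x - a x) * (an n x - a x))"
          by (simp add: algebra_simps)
      qed
    qed
    also have "\<dots> = (C * C) * ip \<Omega> (\<lambda>x. an n x - a x) (\<lambda>x. an n x - a x)"
      by (simp add: ip_def)
    finally have le: "ip \<Omega> (\<lambda>x. h x * an n x - h x * a x) (\<lambda>x. h x * an n x - h x * a x)
        \<le> (C * C) * ip \<Omega> (\<lambda>x. an n x - a x) (\<lambda>x. an n x - a x)" unfolding eq .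
    have "0 \<le> ip \<Omega> (\<lambda>x. h x * an n x - h x * a x) (\<lambda>x. h x * an n x - h x * a x)" by (rule ip_self_nonneg)
    then show ?thesis using le by simp
  qed
  have "(\<lambda>n. (C * C) * ip \<Omega> (\<lambda>x. an n x - a x) (\<lambda>x. an n x - a x)) \<longlonglongrightarrow> (C * C) * 0"
    by (intro tendsto_mult tendsto_const c)
  then have g0: "(\<lambda>n. (C * C) * ip \<Omega> (\<lambda>x. an n x - a x) (\<lambda>x. an n x - a x)) \<longlonglongrightarrow> 0" by simp
  show ?thesis by (rule Lim_null_comparison[OF always_eventually g0]) (rule allI, rule bnd)
qed

lemma wgrad_L2v:
  assumes "H1 \<Omega> u" shows "L2v \<Omega> (wgrad \<Omega> u)"
proof -
  obtain G where "L2v \<Omega> G \<and> is_weak_grad \<Omega> u G" using assms by (auto simp: H1_def)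
  then have "L2v \<Omega> (wgrad \<Omega> u) \<and> is_weak_grad \<Omega> u (wgrad \<Omega> u)"
    unfolding wgrad_def by (rule someI[of "\<lambda>G. L2v \<Omega> G \<and> is_weak_grad \<Omega> u G"])
  then show ?thesis by blast
qed

lemma wdiv_props:
  assumes "Hdiv \<Omega> \<sigma>" shows "L2 \<Omega> (wdiv \<Omega> \<sigma>) \<and> is_weak_div \<Omega> \<sigma> (wdiv \<Omega> \<sigma>)"
proof -
  obtain D where "L2 \<Omega> D \<and> is_weak_div \<Omega> \<sigma> D" using assms by (auto simp: Hdiv_def)
  then show ?thesis unfolding wdiv_def by (rule someI[of "\<lambda>D. L2 \<Omega> D \<and> is_weak_div \<Omega> \<sigma> D"])
qed

lemma cgrad_L2v: "test_fun \<Omega> \<phi> \<Longrightarrow> \<Omega> \<in> lmeasurable \<Longrightarrow> L2v \<Omega> (cgrad \<phi>)"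
  unfolding L2v_def using test_L2 by blast

lemma H10_approx:
  assumes \<Omega>: "\<Omega> \<in> lmeasurable" and u: "H10 \<Omega> u"
  obtains \<phi> where "\<And>n. test_fun \<Omega> (\<phi> n)"
    "(\<lambda>n. ip \<Omega> (\<lambda>x. \<phi> n x - u x) (\<lambda>x. \<phi> n x - u x)) \<longlonglongrightarrow> 0"
    "\<And>i. (\<lambda>n. ip \<Omega> (\<lambda>x. cgrad (\<phi> n) x $ i - wgrad \<Omega> u x $ i) (\<lambda>x. cgrad (\<phi> n) x $ i - wgrad \<Omega> u x $ i)) \<longlonglongrightarrow> 0"
proof -
  obtain \<phi> where t: "\<And>n. test_fun \<Omega> (\<phi> n)"
    and s: "(\<lambda>n. nrm \<Omega> (\<lambda>x. \<phi> n x - u x) + nrmv \<Omega> (\<lambda>x. cgrad (\<phi> n) x - wgrad \<Omega> u x)) \<longlonglongrightarrow> 0"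
    using u unfolding H10_def by blast
  have G: "L2v \<Omega> (wgrad \<Omega> u)" using u by (simp add: H10_def wgrad_L2v)
  have nv: "0 \<le> nrmv \<Omega> v" for v using ipv_self_nonneg[of \<Omega> v] by (simp add: nrmv_def)
  have n1: "(\<lambda>n. nrm \<Omega> (\<lambda>x. \<phi> n x - u x)) \<longlonglongrightarrow> 0"
  proof (rule tendsto_sandwich[OF always_eventually always_eventually tendsto_const s])
    show "\<forall>n. 0 \<le> nrm \<Omega> (\<lambda>x. \<phi> n x - u x)" by (intro allI nrm_nonneg)
    show "\<forall>n. nrm \<Omega> (\<lambda>x. \<phi> n x - u x) \<le> nrm \<Omega> (\<lambda>x. \<phi> n x - u x) + nrmv \<Omega> (\<lambda>x. cgrad (\<phi> n) x - wgrad \<Omega> u x)"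
      using nv by simp
  qed
  have n2: "(\<lambda>n. nrmv \<Omega> (\<lambda>x. cgrad (\<phi> n) x - wgrad \<Omega> u x)) \<longlonglongrightarrow> 0"
  proof (rule tendsto_sandwich[OF always_eventually always_eventually tendsto_const s])
    show "\<forall>n. 0 \<le> nrmv \<Omega> (\<lambda>x. cgrad (\<phi> n) x - wgrad \<Omega> u x)" using nv by simp
    show "\<forall>n. nrmv \<Omega> (\<lambda>x. cgrad (\<phi> n) x - wgrad \<Omega> u x) \<le> nrm \<Omega> (\<lambda>x. \<phi> n x - u x) + nrmv \<Omega> (\<lambda>x. cgrad (\<phi> n) x - wgrad \<Omega> u x)"
    proof
      fix n
      have "0 \<le> nrm \<Omega> (\<lambda>x. \<phi> n x - u x)" by (rule nrm_nonneg)
      then show "nrmv \<Omega> (\<lambda>x. cgrad (\<phi> n) x - wgrad \<Omega> u x) \<le> nrm \<Omega> (\<lambda>x. \<phi> n x - u x) + nrmv \<Omega> (\<lambda>x. cgrad (\<phi> n) x - wgrad \<Omega> u x)"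
        by simp
    qed
  qed
  have "(\<lambda>n. (nrmv \<Omega> (\<lambda>x. cgrad (\<phi> n) x - wgrad \<Omega> u x))^2) \<longlonglongrightarrow> 0^2"
    by (intro tendsto_power n2)
  moreover have "(nrmv \<Omega> v)^2 = ipv \<Omega> v v" for v by (simp add: nrmv_def ipv_self_nonneg)
  ultimately have v2: "(\<lambda>n. ipv \<Omega> (\<lambda>x. cgrad (\<phi> n) x - wgrad \<Omega> u x) (\<lambda>x. cgrad (\<phi> n) x - wgrad \<Omega> u x)) \<longlonglongrightarrow> 0"
    by simp
  have ci: "(\<lambda>n. ip \<Omega> (\<lambda>x. cgrad (\<phi> n) x $ i - wgrad \<Omega> u x $ i) (\<lambda>x. cgrad (\<phi> n) x $ i - wgrad \<Omega> u x $ i)) \<longlonglongrightarrow> 0" for i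
  proof (rule tendsto_sandwich[OF _ _ tendsto_const v2])
    show "\<forall>\<^sub>F n in sequentially. 0 \<le> ip \<Omega> (\<lambda>x. cgrad (\<phi> n) x $ i - wgrad \<Omega> u x $ i) (\<lambda>x. cgrad (\<phi> n) x $ i - wgrad \<Omega> u x $ i)"
      by (rule always_eventually) (simp add: ip_self_nonneg)
    have le: "ip \<Omega> (\<lambda>x. cgrad (\<phi> n) x $ i - wgrad \<Omega> u x $ i) (\<lambda>x. cgrad (\<phi> n) x $ i - wgrad \<Omega> u x $ i)
        \<le> ipv \<Omega> (\<lambda>x. cgrad (\<phi> n) x - wgrad \<Omega> u x) (\<lambda>x. cgrad (\<phi> n) x - wgrad \<Omega> u x)" for n
      using ip_comp_le[OF L2v_diff[OF cgrad_L2v[OF t \<Omega>] G], where i=i] by simp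
    show "\<forall>\<^sub>F n in sequentially. ip \<Omega> (\<lambda>x. cgrad (\<phi> n) x $ i - wgrad \<Omega> u x $ i) (\<lambda>x. cgrad (\<phi> n) x $ i - wgrad \<Omega> u x $ i)
        \<le> ipv \<Omega> (\<lambda>x. cgrad (\<phi> n) x - wgrad \<Omega> u x) (\<lambda>x. cgrad (\<phi> n) x - wgrad \<Omega> u x)"
      by (rule always_eventually) (use le in blast)
  qed
  show ?thesis using that t nrm_to_ip[OF n1] ci by blast
qed

lemma ip_const_conv: "(\<lambda>n. ip \<Omega> (\<lambda>x. a x - a x) (\<lambda>x. a x - a x)) \<longlonglongrightarrow> 0"
  by (simp add: ip_def)

lemma H10_L2: "H10 \<Omega> u \<Longrightarrow> L2 \<Omega> u"
  by (simp add: H10_def H1_def)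

lemma H10_G: "H10 \<Omega> u \<Longrightarrow> L2v \<Omega> (wgrad \<Omega> u)"
  by (simp add: H10_def wgrad_L2v)

lemma IBP1:
  assumes \<Omega>: "\<Omega> \<in> lmeasurable" and u: "H10 \<Omega> u" and \<sigma>: "Hdiv \<Omega> \<sigma>"
  shows "ip \<Omega> u (wdiv \<Omega> \<sigma>) = - ipv \<Omega> \<sigma> (wgrad \<Omega> u)"
proof -
  obtain \<phi> where t: "\<And>n. test_fun \<Omega> (\<phi> n)"
    and c0: "(\<lambda>n. ip \<Omega> (\<lambda>x. \<phi> n x - u x) (\<lambda>x. \<phi> n x - u x)) \<longlonglongrightarrow> 0"
    and ci: "\<And>i. (\<lambda>n. ip \<Omega> (\<lambda>x. cgrad (\<phi> n) x $ i - wgrad \<Omega> u x $ i) (\<lambda>x. cgrad (\<phi> n) x $ i - wgrad \<Omega> u x $ i)) \<longlonglongrightarrow> 0"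
    using H10_approx[OF \<Omega> u] by blast
  define D where "D = wdiv \<Omega> \<sigma>"
  define G where "G = wgrad \<Omega> u"
  have DL2: "L2 \<Omega> D" and wd: "is_weak_div \<Omega> \<sigma> D" using wdiv_props[OF \<sigma>] by (auto simp: D_def)
  have sL2v: "L2v \<Omega> \<sigma>" using \<sigma> by (simp add: Hdiv_def)
  have uL2: "L2 \<Omega> u" using H10_L2[OF u] .
  have GL2v: "L2v \<Omega> G" using H10_G[OF u] by (simp add: G_def)
  have eq: "ipv \<Omega> \<sigma> (cgrad (\<phi> n)) = - ip \<Omega> D (\<phi> n)" for n
    using wd t[of n] unfolding is_weak_div_def ipv_def ip_def by blast
  have lim1: "(\<lambda>n. ipv \<Omega> \<sigma> (cgrad (\<phi> n))) \<longlonglongrightarrow> ipv \<Omega> \<sigma> G"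
  proof -
    have "(\<lambda>n. \<Sum>i\<in>UNIV. ip \<Omega> (\<lambda>x. \<sigma> x $ i) (\<lambda>x. cgrad (\<phi> n) x $ i)) \<longlonglongrightarrow> (\<Sum>i\<in>UNIV. ip \<Omega> (\<lambda>x. \<sigma> x $ i) (\<lambda>x. G x $ i))"
    proof (rule tendsto_sum)
      fix i
      show "(\<lambda>n. ip \<Omega> (\<lambda>x. \<sigma> x $ i) (\<lambda>x. cgrad (\<phi> n) x $ i)) \<longlonglongrightarrow> ip \<Omega> (\<lambda>x. \<sigma> x $ i) (\<lambda>x. G x $ i)"
        using sL2v GL2v test_L2[OF t \<Omega>] ci[of i] unfolding L2v_def G_def
        by (intro L2_prod_conv[where an="\<lambda>n x. \<sigma> x $ i"] ip_const_conv) auto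
    qed
    then show ?thesis
      using ipv_split(2)[OF sL2v cgrad_L2v[OF t \<Omega>]] ipv_split(2)[OF sL2v GL2v] by simp
  qed
  have lim2: "(\<lambda>n. ip \<Omega> D (\<phi> n)) \<longlonglongrightarrow> ip \<Omega> D u"
    using DL2 uL2 test_L2[OF t \<Omega>] c0
    by (intro L2_prod_conv[where an="\<lambda>n. D"] ip_const_conv) auto
  have "(\<lambda>n. ipv \<Omega> \<sigma> (cgrad (\<phi> n))) \<longlonglongrightarrow> - ip \<Omega> D u"
    unfolding eq by (intro tendsto_minus lim2)
  then have "ipv \<Omega> \<sigma> G = - ip \<Omega> D u" using lim1 LIMSEQ_unique by blast
  then show ?thesis by (simp add: D_def G_def ip_comm)
qed

lemma ip_beta_split:
  assumes a: "L2 \<Omega> a" and v: "L2v \<Omega> v"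
    and \<beta>m: "\<And>i. (\<lambda>x. \<beta> x $ i) \<in> borel_measurable (lebesgue_on \<Omega>)"
    and \<beta>b: "\<And>i. AE x in lebesgue_on \<Omega>. \<bar>\<beta> x $ i\<bar> \<le> Cb i"
  shows "ip \<Omega> a (\<lambda>x. \<beta> x \<bullet> v x) = (\<Sum>i\<in>UNIV. ip \<Omega> a (\<lambda>x. \<beta> x $ i * v x $ i))"
proof -
  have i: "integrable (lebesgue_on \<Omega>) (\<lambda>x. a x * (\<beta> x $ i * v x $ i))" for i
    using v by (intro L2_prod a L2_bdd_mult[OF _ \<beta>m \<beta>b]) (simp add: L2v_def)
  have "ip \<Omega> a (\<lambda>x. \<beta> x \<bullet> v x) = (\<integral>x. (\<Sum>i\<in>UNIV. a x * (\<beta> x $ i * v x $ i)) \<partial>lebesgue_on \<Omega>)"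
    unfolding ip_def inner_vec_def by (simp add: sum_distrib_left)
  also have "\<dots> = (\<Sum>i\<in>UNIV. ip \<Omega> a (\<lambda>x. \<beta> x $ i * v x $ i))"
    unfolding ip_def using i by (simp add: integral_sum)
  finally show ?thesis .
qed

lemma IBP2:
  assumes \<Omega>: "\<Omega> \<in> lmeasurable" and u: "H10 \<Omega> u" and wd: "is_weak_div \<Omega> \<beta> D"
    and Db: "AE x in lebesgue_on \<Omega>. \<bar>D x\<bar> \<le> CD"
    and \<beta>m: "\<And>i. (\<lambda>x. \<beta> x $ i) \<in> borel_measurable (lebesgue_on \<Omega>)"
    and \<beta>b: "\<And>i. AE x in lebesgue_on \<Omega>. \<bar>\<beta> x $ i\<bar> \<le> Cb i"
  shows "ip \<Omega> u (\<lambda>x. \<beta> x \<bullet> wgrad \<Omega> u x) = -(1/2) * ip \<Omega> (\<lambda>x. D x * u x) u"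
proof -
  obtain \<phi> where t: "\<And>n. test_fun \<Omega> (\<phi> n)"
    and c0: "(\<lambda>n. ip \<Omega> (\<lambda>x. \<phi> n x - u x) (\<lambda>x. \<phi> n x - u x)) \<longlonglongrightarrow> 0"
    and ci: "\<And>i. (\<lambda>n. ip \<Omega> (\<lambda>x. cgrad (\<phi> n) x $ i - wgrad \<Omega> u x $ i) (\<lambda>x. cgrad (\<phi> n) x $ i - wgrad \<Omega> u x $ i)) \<longlonglongrightarrow> 0"
    using H10_approx[OF \<Omega> u] by blast
  define G where "G = wgrad \<Omega> u"
  have uL2: "L2 \<Omega> u" using H10_L2[OF u] .
  have GL2v: "L2v \<Omega> G" using H10_G[OF u] by (simp add: G_def)
  have Dm: "D \<in> borel_measurable (lebesgue_on \<Omega>)" using wd by (simp add: is_weak_div_def)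
  have key: "2 * ip \<Omega> \<psi> (\<lambda>x. \<beta> x \<bullet> cgrad \<psi> x) = - ip \<Omega> (\<lambda>x. D x * \<psi> x) \<psi>" if ts: "test_fun \<Omega> \<psi>" for \<psi>
  proof -
    have w: "(\<integral>x. \<beta> x \<bullet> cgrad (\<lambda>x. \<psi> x * \<psi> x) x \<partial>lebesgue_on \<Omega>) = - (\<integral>x. D x * (\<psi> x * \<psi> x) \<partial>lebesgue_on \<Omega>)"
      using wd test_sq[OF ts] unfolding is_weak_div_def by blast
    have "(\<integral>x. \<beta> x \<bullet> cgrad (\<lambda>x. \<psi> x * \<psi> x) x \<partial>lebesgue_on \<Omega>) = (\<integral>x. 2 * (\<psi> x * (\<beta> x \<bullet> cgrad \<psi> x)) \<partial>lebesgue_on \<Omega>)"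
      by (simp add: cgrad_sq[OF ts] mult.assoc)
    also have "\<dots> = 2 * ip \<Omega> \<psi> (\<lambda>x. \<beta> x \<bullet> cgrad \<psi> x)" by (simp add: ip_def)
    finally have l: "(\<integral>x. \<beta> x \<bullet> cgrad (\<lambda>x. \<psi> x * \<psi> x) x \<partial>lebesgue_on \<Omega>) = 2 * ip \<Omega> \<psi> (\<lambda>x. \<beta> x \<bullet> cgrad \<psi> x)" .
    have r: "(\<integral>x. D x * (\<psi> x * \<psi> x) \<partial>lebesgue_on \<Omega>) = ip \<Omega> (\<lambda>x. D x * \<psi> x) \<psi>"
      by (simp add: ip_def mult.assoc)
    show ?thesis using w l r by simp
  qed
  have lim1: "(\<lambda>n. ip \<Omega> (\<phi> n) (\<lambda>x. \<beta> x \<bullet> cgrad (\<phi> n) x)) \<longlonglongrightarrow> ip \<Omega> u (\<lambda>x. \<beta> x \<bullet> G x)"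
  proof -
    have "(\<lambda>n. \<Sum>i\<in>UNIV. ip \<Omega> (\<phi> n) (\<lambda>x. \<beta> x $ i * cgrad (\<phi> n) x $ i)) \<longlonglongrightarrow> (\<Sum>i\<in>UNIV. ip \<Omega> u (\<lambda>x. \<beta> x $ i * G x $ i))"
    proof (rule tendsto_sum)
      fix i
      have Gi: "L2 \<Omega> (\<lambda>x. G x $ i)" using GL2v by (simp add: L2v_def)
      have pi: "L2 \<Omega> (\<lambda>x. cgrad (\<phi> n) x $ i)" for n using test_L2[OF t \<Omega>] by blast
      show "(\<lambda>n. ip \<Omega> (\<phi> n) (\<lambda>x. \<beta> x $ i * cgrad (\<phi> n) x $ i)) \<longlonglongrightarrow> ip \<Omega> u (\<lambda>x. \<beta> x $ i * G x $ i)"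
      proof (rule L2_prod_conv[OF uL2 _ _ _ c0])
        show "L2 \<Omega> (\<lambda>x. \<beta> x $ i * G x $ i)" by (rule L2_bdd_mult[OF Gi \<beta>m \<beta>b])
        show "L2 \<Omega> (\<phi> n)" for n using test_L2[OF t \<Omega>] by blast
        show "L2 \<Omega> (\<lambda>x. \<beta> x $ i * cgrad (\<phi> n) x $ i)" for n by (rule L2_bdd_mult[OF pi \<beta>m \<beta>b])
        show "(\<lambda>n. ip \<Omega> (\<lambda>x. \<beta> x $ i * cgrad (\<phi> n) x $ i - \<beta> x $ i * G x $ i)
                 (\<lambda>x. \<beta> x $ i * cgrad (\<phi> n) x $ i - \<beta> x $ i * G x $ i)) \<longlonglongrightarrow> 0"
          by (rule bdd_conv[OF \<beta>m \<beta>b Gi pi]) (use ci[of i] in \<open>simp add: G_def\<close>)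
      qed
    qed
    moreover have "ip \<Omega> (\<phi> n) (\<lambda>x. \<beta> x \<bullet> cgrad (\<phi> n) x) = (\<Sum>i\<in>UNIV. ip \<Omega> (\<phi> n) (\<lambda>x. \<beta> x $ i * cgrad (\<phi> n) x $ i))" for n
      using test_L2[OF t \<Omega>] cgrad_L2v[OF t \<Omega>] by (intro ip_beta_split[OF _ _ \<beta>m \<beta>b]) auto
    moreover have "ip \<Omega> u (\<lambda>x. \<beta> x \<bullet> G x) = (\<Sum>i\<in>UNIV. ip \<Omega> u (\<lambda>x. \<beta> x $ i * G x $ i))"
      by (rule ip_beta_split[OF uL2 GL2v \<beta>m \<beta>b])
    ultimately show ?thesis by simp
  qed
  have lim2: "(\<lambda>n. ip \<Omega> (\<lambda>x. D x * \<phi> n x) (\<phi> n)) \<longlonglongrightarrow> ip \<Omega> (\<lambda>x. D x * u x) u"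
  proof (rule L2_prod_conv[OF _ uL2 _ _ _ c0])
    show "L2 \<Omega> (\<lambda>x. D x * u x)" by (rule L2_bdd_mult[OF uL2 Dm Db])
    show "L2 \<Omega> (\<lambda>x. D x * \<phi> n x)" for n using test_L2[OF t \<Omega>] by (intro L2_bdd_mult[OF _ Dm Db]) blast
    show "L2 \<Omega> (\<phi> n)" for n using test_L2[OF t \<Omega>] by blast
    show "(\<lambda>n. ip \<Omega> (\<lambda>x. D x * \<phi> n x - D x * u x) (\<lambda>x. D x * \<phi> n x - D x * u x)) \<longlonglongrightarrow> 0"
      using test_L2[OF t \<Omega>] by (intro bdd_conv[OF Dm Db uL2 _ c0]) blast
  qed
  have "(\<lambda>n. 2 * ip \<Omega> (\<phi> n) (\<lambda>x. \<beta> x \<bullet> cgrad (\<phi> n) x)) \<longlonglongrightarrow> 2 * ip \<Omega> u (\<lambda>x. \<beta> x \<bullet> G x)"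
    by (intro tendsto_mult tendsto_const lim1)
  moreover have "(\<lambda>n. 2 * ip \<Omega> (\<phi> n) (\<lambda>x. \<beta> x \<bullet> cgrad (\<phi> n) x)) \<longlonglongrightarrow> - ip \<Omega> (\<lambda>x. D x * u x) u"
    unfolding key[OF t] by (intro tendsto_minus lim2)
  ultimately have "2 * ip \<Omega> u (\<lambda>x. \<beta> x \<bullet> G x) = - ip \<Omega> (\<lambda>x. D x * u x) u" using LIMSEQ_unique by blast
  then show ?thesis by (simp add: G_def)
qed

lemma int_bdd_mult:
  assumes f: "integrable M f" and h: "h \<in> borel_measurable M" and C: "AE x in M. \<bar>h x\<bar> \<le> C"
  shows "integrable M (\<lambda>x. h x * (f x :: real))"
proof -
  have i: "integrable M (\<lambda>x. C * \<bar>f x\<bar>)" using f by (intro integrable_mult_right integrable_abs)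
  have m: "(\<lambda>x. h x * f x) \<in> borel_measurable M" using h borel_measurable_integrable[OF f] by simp
  have ae: "AE x in M. norm (h x * f x) \<le> norm (C * \<bar>f x\<bar>)"
    using C
  proof (rule AE_mp, intro AE_I2 impI)
    fix x assume hx: "\<bar>h x\<bar> \<le> C"
    have C0: "0 \<le> C" using hx abs_ge_zero[of "h x"] by linarith
    have "\<bar>h x\<bar> * \<bar>f x\<bar> \<le> C * \<bar>f x\<bar>" using hx by (intro mult_right_mono) auto
    then show "norm (h x * f x) \<le> norm (C * \<bar>f x\<bar>)" using C0 by (simp add: abs_mult)
  qed
  show ?thesis by (rule Bochner_Integration.integrable_bound[OF i m ae])
qed

lemma Linf_bound: "Linf \<Omega> h \<Longrightarrow> \<exists>C. AE x in lebesgue_on \<Omega>. \<bar>h x\<bar> \<le> C"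
  by (simp add: Linf_def)

lemma Linf_meas: "Linf \<Omega> h \<Longrightarrow> h \<in> borel_measurable (lebesgue_on \<Omega>)"
  by (simp add: Linf_def)

lemma L2v_comp: "L2v \<Omega> v \<Longrightarrow> L2 \<Omega> (\<lambda>x. v x $ i)"
  by (simp add: L2v_def)

lemma inner_meas:
  assumes "\<And>i. (\<lambda>x. v x $ i) \<in> borel_measurable M" "\<And>i. (\<lambda>x. w x $ i) \<in> borel_measurable M"
  shows "(\<lambda>x. v x \<bullet> (w x :: real^'n)) \<in> borel_measurable M"
  unfolding inner_vec_def using assms by (intro borel_measurable_sum borel_measurable_times) auto

lemma mv_meas:
  assumes "\<And>i j. (\<lambda>x. A x $ i $ j) \<in> borel_measurable M" "\<And>i. (\<lambda>x. w x $ i) \<in> borel_measurable M"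
  shows "(\<lambda>x. (A x *v (w x :: real^'n)) $ i) \<in> borel_measurable M"
  unfolding matrix_vector_mult_def using assms by (simp add: borel_measurable_sum borel_measurable_times)

lemma cram_meas:
  fixes A :: "'a \<Rightarrow> real^'n^'n"
  assumes "\<And>i j. (\<lambda>x. A x $ i $ j) \<in> borel_measurable M" "\<And>i. (\<lambda>x. s x $ i) \<in> borel_measurable M"
  shows "(\<lambda>x. cram (A x) (s x) $ k) \<in> borel_measurable M"
proof -
  have "(\<lambda>x. det (\<chi> i j. if j = k then s x $ i else A x $ i $ j)) \<in> borel_measurable M"
    by (rule det_meas) (use assms in simp)
  moreover have "(\<lambda>x. det (A x)) \<in> borel_measurable M" by (rule det_meas) (use assms in simp)
  ultimately show ?thesis unfolding cram_def by simp
qed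

lemma flux_ineq:
  fixes \<Omega> :: "(real^'d) set" and A :: "real^'d \<Rightarrow> real^'d^'d"
  assumes \<Omega>: "\<Omega> \<in> lmeasurable" and u: "H10 \<Omega> u" and \<sigma>: "Hdiv \<Omega> \<sigma>"
    and A_Linf: "\<forall>i j. Linf \<Omega> (\<lambda>x. A x $ i $ j)"
    and A_sym: "AE x in lebesgue_on \<Omega>. transpose (A x) = A x"
    and \<alpha>0: "\<alpha>0 > 0"
    and A_ell: "AE x in lebesgue_on \<Omega>. lambda_min (A x) \<ge> \<alpha>0"
  shows "-2 * ipv \<Omega> \<sigma> (wgrad \<Omega> u) \<le> ipv \<Omega> (Flux \<Omega> A (u, \<sigma>)) (Flux \<Omega> A (u, \<sigma>))"
proof -
  let ?M = "lebesgue_on \<Omega>"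
  have S: "\<Omega> \<in> sets lebesgue" using \<Omega> by (simp add: fmeasurableD)
  define g where "g = wgrad \<Omega> u"
  define F where "F = Flux \<Omega> A (u, \<sigma>)"
  have gL: "L2v \<Omega> g" using H10_G[OF u] by (simp add: g_def)
  have sL: "L2v \<Omega> \<sigma>" using \<sigma> by (simp add: Hdiv_def)
  have gm: "\<And>i. (\<lambda>x. g x $ i) \<in> borel_measurable ?M" using gL by (simp add: L2v_def L2_def)
  have sm: "\<And>i. (\<lambda>x. \<sigma> x $ i) \<in> borel_measurable ?M" using sL by (simp add: L2v_def L2_def)
  have Am: "\<And>i j. (\<lambda>x. A x $ i $ j) \<in> borel_measurable ?M" using A_Linf by (simp add: Linf_def)
  have Fx: "F x = msqrt (A x) *v g x - matrix_inv (msqrt (A x)) *v \<sigma> x" for x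
    by (simp add: F_def Flux_def g_def)
  define H where "H x = g x \<bullet> (A x *v g x) - 2 * (g x \<bullet> \<sigma> x) + \<sigma> x \<bullet> cram (A x) (\<sigma> x)" for x
  have good: "AE x in ?M. transpose (A x) = A x \<and> lambda_min (A x) \<ge> \<alpha>0"
    using A_sym A_ell by eventually_elim auto
  have aeH: "AE x in ?M. H x = F x \<bullet> F x"
    using good by eventually_elim (simp add: H_def Fx flux_pt(1)[OF _ _ \<alpha>0])
  have aeP: "AE x in ?M. 0 \<le> F x \<bullet> F x + 2 * (g x \<bullet> \<sigma> x)"
    using good by eventually_elim (simp add: Fx flux_pt(2)[OF _ _ \<alpha>0])
  have aeC: "AE x in ?M. \<bar>\<sigma> x \<bullet> cram (A x) (\<sigma> x)\<bar> \<le> (\<sigma> x \<bullet> \<sigma> x) / \<alpha>0"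
    using good
  proof eventually_elim
    case (elim x)
    then have "0 \<le> \<sigma> x \<bullet> cram (A x) (\<sigma> x)" "\<sigma> x \<bullet> cram (A x) (\<sigma> x) \<le> (\<sigma> x \<bullet> \<sigma> x) / \<alpha>0"
      using flux_pt(3,4)[OF _ _ \<alpha>0, of "A x" "\<sigma> x"] by auto
    then show ?case by simp
  qed
  have cm: "(\<lambda>x. \<sigma> x \<bullet> cram (A x) (\<sigma> x)) \<in> borel_measurable ?M"
    by (intro inner_meas sm cram_meas Am)
  have gAg_m: "(\<lambda>x. g x \<bullet> (A x *v g x)) \<in> borel_measurable ?M"
    by (intro inner_meas gm mv_meas Am)
  have gs_m: "(\<lambda>x. g x \<bullet> \<sigma> x) \<in> borel_measurable ?M" by (intro inner_meas gm sm)
  have Hm: "H \<in> borel_measurable ?M" unfolding H_def using cm gAg_m gs_m by simp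
  have int_gAg: "integrable ?M (\<lambda>x. g x \<bullet> (A x *v g x))"
  proof -
    have e: "g x \<bullet> (A x *v g x) = (\<Sum>i\<in>UNIV. \<Sum>j\<in>UNIV. A x $ i $ j * (g x $ i * g x $ j))" for x
      by (simp add: inner_vec_def matrix_vector_mult_def sum_distrib_left algebra_simps)
    have "integrable ?M (\<lambda>x. A x $ i $ j * (g x $ i * g x $ j))" for i j
    proof -
      obtain C where "AE x in ?M. \<bar>A x $ i $ j\<bar> \<le> C" using A_Linf Linf_bound by blast
      then show ?thesis using Am L2_prod[OF L2v_comp[OF gL] L2v_comp[OF gL]] int_bdd_mult by blast
    qed
    then show ?thesis unfolding e by simp
  qed
  have int_gs: "integrable ?M (\<lambda>x. g x \<bullet> \<sigma> x)" by (rule ipv_split(1)[OF gL sL])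
  have int_ss: "integrable ?M (\<lambda>x. (\<sigma> x \<bullet> \<sigma> x) / \<alpha>0)" using ipv_split(1)[OF sL sL] by simp
  have int_c: "integrable ?M (\<lambda>x. \<sigma> x \<bullet> cram (A x) (\<sigma> x))"
  proof (rule Bochner_Integration.integrable_bound[OF int_ss cm])
    show "AE x in ?M. norm (\<sigma> x \<bullet> cram (A x) (\<sigma> x)) \<le> norm ((\<sigma> x \<bullet> \<sigma> x) / \<alpha>0)"
      using aeC by eventually_elim (use \<alpha>0 in auto)
  qed
  have intH: "integrable ?M H" unfolding H_def using int_gAg int_gs int_c by simp
  have FFm: "(\<lambda>x. F x \<bullet> F x) \<in> borel_measurable ?M" by (rule meas_AE_on[OF S Hm aeH])
  have intF: "integrable ?M (\<lambda>x. F x \<bullet> F x)" by (rule integrable_cong_AE_imp[OF intH FFm aeH])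
  have "-2 * ipv \<Omega> \<sigma> g = (\<integral>x. -2 * (g x \<bullet> \<sigma> x) \<partial>?M)"
    by (simp add: ipv_def inner_commute)
  also have "\<dots> \<le> (\<integral>x. F x \<bullet> F x \<partial>?M)"
  proof (rule integral_mono_AE)
    show "integrable ?M (\<lambda>x. -2 * (g x \<bullet> \<sigma> x))" using int_gs by simp
    show "integrable ?M (\<lambda>x. F x \<bullet> F x)" by (rule intF)
    show "AE x in ?M. -2 * (g x \<bullet> \<sigma> x) \<le> F x \<bullet> F x" using aeP by eventually_elim simp
  qed
  finally show ?thesis by (simp add: ipv_def F_def g_def)
qed

lemma beta_L2:
  assumes v: "L2v \<Omega> v"
    and \<beta>m: "\<And>i. (\<lambda>x. \<beta> x $ i) \<in> borel_measurable (lebesgue_on \<Omega>)"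
    and \<beta>b: "\<And>i. AE x in lebesgue_on \<Omega>. \<bar>\<beta> x $ i\<bar> \<le> Cb i"
  shows "L2 \<Omega> (\<lambda>x. \<beta> x \<bullet> v x)"
proof -
  have "L2 \<Omega> (\<lambda>x. \<Sum>i\<in>UNIV. \<beta> x $ i * v x $ i)"
    by (rule L2_sum) (auto intro: L2_bdd_mult[OF L2v_comp[OF v] \<beta>m \<beta>b])
  then show ?thesis by (simp add: inner_vec_def)
qed

lemma Lop_L2:
  assumes u: "H10 \<Omega> u" and \<sigma>: "Hdiv \<Omega> \<sigma>"
    and \<beta>m: "\<And>i. (\<lambda>x. \<beta> x $ i) \<in> borel_measurable (lebesgue_on \<Omega>)"
    and \<beta>b: "\<And>i. AE x in lebesgue_on \<Omega>. \<bar>\<beta> x $ i\<bar> \<le> Cb i"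
    and \<gamma>m: "\<gamma> \<in> borel_measurable (lebesgue_on \<Omega>)" and \<gamma>b: "AE x in lebesgue_on \<Omega>. \<bar>\<gamma> x\<bar> \<le> Cg"
  shows "L2 \<Omega> (Lop \<Omega> \<beta> \<gamma> (u, \<sigma>))"
proof -
  have a: "L2 \<Omega> (\<lambda>x. (-1) * wdiv \<Omega> \<sigma> x)" using wdiv_props[OF \<sigma>] by (intro L2_cmult) blast
  have b: "L2 \<Omega> (\<lambda>x. \<beta> x \<bullet> wgrad \<Omega> u x)" by (rule beta_L2[OF H10_G[OF u] \<beta>m \<beta>b])
  have c: "L2 \<Omega> (\<lambda>x. \<gamma> x * u x)" by (rule L2_bdd_mult[OF H10_L2[OF u] \<gamma>m \<gamma>b])
  have "L2 \<Omega> (\<lambda>x. ((-1) * wdiv \<Omega> \<sigma> x - \<beta> x \<bullet> wgrad \<Omega> u x) + \<gamma> x * u x)"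
    by (rule L2_add[OF L2_diff[OF a b] c])
  moreover have "Lop \<Omega> \<beta> \<gamma> (u, \<sigma>) = (\<lambda>x. ((-1) * wdiv \<Omega> \<sigma> x - \<beta> x \<bullet> wgrad \<Omega> u x) + \<gamma> x * u x)"
    by (rule ext) (simp add: Lop_def)
  ultimately show ?thesis by simp
qed

lemma key_ineq:
  fixes \<Omega> :: "(real^'d) set" and A :: "real^'d \<Rightarrow> real^'d^'d"
  assumes \<Omega>: "\<Omega> \<in> lmeasurable" and u: "H10 \<Omega> u" and \<sigma>: "Hdiv \<Omega> \<sigma>"
    and A_Linf: "\<forall>i j. Linf \<Omega> (\<lambda>x. A x $ i $ j)"
    and A_sym: "AE x in lebesgue_on \<Omega>. transpose (A x) = A x"
    and \<alpha>0: "\<alpha>0 > 0"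
    and A_ell: "AE x in lebesgue_on \<Omega>. lambda_min (A x) \<ge> \<alpha>0"
    and \<beta>_Linf: "\<forall>i. Linf \<Omega> (\<lambda>x. \<beta> x $ i)"
    and \<gamma>_Linf: "Linf \<Omega> \<gamma>"
    and div\<beta>: "\<exists>D. is_weak_div \<Omega> \<beta> D \<and> Linf \<Omega> (\<lambda>x. D x / 2 + \<gamma> x)
                  \<and> (AE x in lebesgue_on \<Omega>. D x / 2 + \<gamma> x \<ge> 0)"
  shows "0 \<le> 2 * ip \<Omega> u (Lop \<Omega> \<beta> \<gamma> (u, \<sigma>)) + ipv \<Omega> (Flux \<Omega> A (u, \<sigma>)) (Flux \<Omega> A (u, \<sigma>))"
proof -
  let ?M = "lebesgue_on \<Omega>"
  obtain D where wd: "is_weak_div \<Omega> \<beta> D" and DL: "Linf \<Omega> (\<lambda>x. D x / 2 + \<gamma> x)"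
    and Dpos: "AE x in ?M. D x / 2 + \<gamma> x \<ge> 0" using div\<beta> by blast
  have Dm: "D \<in> borel_measurable ?M" using wd by (simp add: is_weak_div_def)
  have \<gamma>m: "\<gamma> \<in> borel_measurable ?M" using \<gamma>_Linf by (simp add: Linf_def)
  obtain Cg where Cg: "AE x in ?M. \<bar>\<gamma> x\<bar> \<le> Cg" using \<gamma>_Linf by (auto simp: Linf_def)
  obtain C1 where C1: "AE x in ?M. \<bar>D x / 2 + \<gamma> x\<bar> \<le> C1" using DL by (auto simp: Linf_def)
  have Db: "AE x in ?M. \<bar>D x\<bar> \<le> 2 * (C1 + Cg)"
    using C1 Cg by eventually_elim (auto simp: abs_le_iff)
  have \<beta>m: "\<And>i. (\<lambda>x. \<beta> x $ i) \<in> borel_measurable ?M" using \<beta>_Linf by (simp add: Linf_def)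
  obtain Cb where \<beta>b: "\<And>i. AE x in ?M. \<bar>\<beta> x $ i\<bar> \<le> Cb i"
    using \<beta>_Linf unfolding Linf_def by metis
  define L where "L = Lop \<Omega> \<beta> \<gamma> (u, \<sigma>)"
  define Ds where "Ds = wdiv \<Omega> \<sigma>"
  define G where "G = wgrad \<Omega> u"
  have uL: "L2 \<Omega> u" by (rule H10_L2[OF u])
  have DsL: "L2 \<Omega> Ds" using wdiv_props[OF \<sigma>] by (simp add: Ds_def)
  have bGL: "L2 \<Omega> (\<lambda>x. \<beta> x \<bullet> G x)" unfolding G_def by (rule beta_L2[OF H10_G[OF u] \<beta>m \<beta>b])
  have guL: "L2 \<Omega> (\<lambda>x. \<gamma> x * u x)" by (rule L2_bdd_mult[OF uL \<gamma>m Cg])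
  have DuL: "L2 \<Omega> (\<lambda>x. D x * u x)" by (rule L2_bdd_mult[OF uL Dm Db])
  have Lx: "L x = - Ds x - \<beta> x \<bullet> G x + \<gamma> x * u x" for x by (simp add: L_def Lop_def Ds_def G_def)
  have "ip \<Omega> u L = (\<integral>x. - (u x * Ds x) - u x * (\<beta> x \<bullet> G x) + u x * (\<gamma> x * u x) \<partial>?M)"
    unfolding ip_def Lx by (simp add: algebra_simps)
  also have "\<dots> = - ip \<Omega> u Ds - ip \<Omega> u (\<lambda>x. \<beta> x \<bullet> G x) + ip \<Omega> u (\<lambda>x. \<gamma> x * u x)"
    unfolding ip_def using L2_prod[OF uL DsL] L2_prod[OF uL bGL] L2_prod[OF uL guL] by simp
  finally have e1: "ip \<Omega> u L = - ip \<Omega> u Ds - ip \<Omega> u (\<lambda>x. \<beta> x \<bullet> G x) + ip \<Omega> u (\<lambda>x. \<gamma> x * u x)" .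
  have i1: "ip \<Omega> u Ds = - ipv \<Omega> \<sigma> G" unfolding Ds_def G_def by (rule IBP1[OF \<Omega> u \<sigma>])
  have i2: "ip \<Omega> u (\<lambda>x. \<beta> x \<bullet> G x) = -(1/2) * ip \<Omega> (\<lambda>x. D x * u x) u"
    unfolding G_def by (rule IBP2[OF \<Omega> u wd Db \<beta>m \<beta>b])
  have "(1/2) * ip \<Omega> (\<lambda>x. D x * u x) u + ip \<Omega> u (\<lambda>x. \<gamma> x * u x)
      = (\<integral>x. (1/2) * (D x * u x * u x) + u x * (\<gamma> x * u x) \<partial>?M)"
    unfolding ip_def using L2_prod[OF DuL uL] L2_prod[OF uL guL] by simp
  also have "\<dots> = (\<integral>x. (D x / 2 + \<gamma> x) * (u x * u x) \<partial>?M)"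
    by (intro Bochner_Integration.integral_cong refl) (simp add: algebra_simps)
  also have "\<dots> \<ge> 0"
  proof (rule integral_nonneg_AE)
    show "AE x in ?M. 0 \<le> (D x / 2 + \<gamma> x) * (u x * u x)" using Dpos by eventually_elim simp
  qed
  finally have pos: "0 \<le> (1/2) * ip \<Omega> (\<lambda>x. D x * u x) u + ip \<Omega> u (\<lambda>x. \<gamma> x * u x)" .
  have fl: "-2 * ipv \<Omega> \<sigma> G \<le> ipv \<Omega> (Flux \<Omega> A (u, \<sigma>)) (Flux \<Omega> A (u, \<sigma>))"
    unfolding G_def by (rule flux_ineq[OF \<Omega> u \<sigma> A_Linf A_sym \<alpha>0 A_ell])
  have "ip \<Omega> u L = ipv \<Omega> \<sigma> G + ((1/2) * ip \<Omega> (\<lambda>x. D x * u x) u + ip \<Omega> u (\<lambda>x. \<gamma> x * u x))"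
    using e1 i1 i2 by simp
  then show ?thesis using pos fl by (simp add: L_def)
qed

lemma step_abs:
  fixes k :: real
  assumes k: "k > 0" and uL: "L2 \<Omega> u" and LL: "L2 \<Omega> L" and gL: "L2 \<Omega> g" and wL: "L2 \<Omega> w"
    and P: "P \<ge> 0" and key: "0 \<le> 2 * ip \<Omega> u L + P"
    and eq: "(1/k) * ip \<Omega> u u + (ip \<Omega> u L + (ip \<Omega> L u + k * ip \<Omega> L L + P))
             = k * ip \<Omega> (\<lambda>x. g x + w x / k) (\<lambda>x. u x / k + L x)"
  shows "nrm \<Omega> u \<le> k * nrm \<Omega> g + nrm \<Omega> w"
proof -
  let ?M = "lebesgue_on \<Omega>"
  define z where "z x = u x + k * L x" for x
  define h where "h x = k * g x + w x" for x
  have zL: "L2 \<Omega> z" unfolding z_def by (rule L2_add[OF uL L2_cmult[OF LL]])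
  have kgL: "L2 \<Omega> (\<lambda>x. k * g x)" by (rule L2_cmult[OF gL])
  have hL: "L2 \<Omega> h" unfolding h_def by (rule L2_add[OF kgL wL])
  have F: "k * ip \<Omega> (\<lambda>x. g x + w x / k) (\<lambda>x. u x / k + L x) = (1/k) * ip \<Omega> h z"
  proof -
    have "ip \<Omega> (\<lambda>x. g x + w x / k) (\<lambda>x. u x / k + L x) = (\<integral>x. (1/(k*k)) * (h x * z x) \<partial>?M)"
      unfolding ip_def using k by (intro Bochner_Integration.integral_cong refl) (simp add: h_def z_def field_simps)
    also have "\<dots> = (1/(k*k)) * ip \<Omega> h z" by (simp add: ip_def)
    finally show ?thesis using k by simp
  qed
  have Z: "ip \<Omega> z z = ip \<Omega> u u + 2 * k * ip \<Omega> u L + k * k * ip \<Omega> L L"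
  proof -
    have "ip \<Omega> z z = (\<integral>x. u x * u x + (2 * k) * (u x * L x) + (k * k) * (L x * L x) \<partial>?M)"
      unfolding ip_def by (intro Bochner_Integration.integral_cong refl) (simp add: z_def algebra_simps)
    also have "\<dots> = ip \<Omega> u u + 2 * k * ip \<Omega> u L + k * k * ip \<Omega> L L"
      unfolding ip_def using L2_int_sq[OF uL] L2_prod[OF uL LL] L2_int_sq[OF LL] by simp
    finally show ?thesis .
  qed
  have Lu: "ip \<Omega> L u = ip \<Omega> u L" by (rule ip_comm)
  have "k * ((1/k) * ip \<Omega> u u + (ip \<Omega> u L + (ip \<Omega> L u + k * ip \<Omega> L L + P))) = ip \<Omega> h z"
    using eq F k by simp
  then have E: "ip \<Omega> u u + 2 * k * ip \<Omega> u L + k * k * ip \<Omega> L L + k * P = ip \<Omega> h z"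
    using k Lu by (simp add: algebra_simps)
  have LLp: "0 \<le> ip \<Omega> L L" by (rule ip_self_nonneg)
  have kk: "0 \<le> k * (2 * ip \<Omega> u L + P)" using k key by simp
  have kd: "k * (2 * ip \<Omega> u L + P) = 2 * k * ip \<Omega> u L + k * P" by (simp add: algebra_simps)
  have kLL: "0 \<le> k * k * ip \<Omega> L L" using k LLp by simp
  have a: "ip \<Omega> u u \<le> ip \<Omega> h z" using E kk kd kLL by linarith
  have kP: "0 \<le> k * P" using k P by simp
  have b: "ip \<Omega> z z \<le> ip \<Omega> h z" using E Z kP by linarith
  have cs: "ip \<Omega> h z \<le> nrm \<Omega> h * nrm \<Omega> z" using ip_CS[OF hL zL] by simp
  have nz: "nrm \<Omega> z \<le> nrm \<Omega> h"
  proof (cases "nrm \<Omega> z = 0")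
    case True then show ?thesis using nrm_nonneg by simp
  next
    case False
    then have pz: "nrm \<Omega> z > 0" using nrm_nonneg[of \<Omega> z] by simp
    have "nrm \<Omega> z * nrm \<Omega> z \<le> nrm \<Omega> h * nrm \<Omega> z"
      using b cs nrm_sq[of \<Omega> z] by (simp add: power2_eq_square)
    then show ?thesis using pz by simp
  qed
  have "(nrm \<Omega> u)^2 \<le> (nrm \<Omega> h)^2"
  proof -
    have "(nrm \<Omega> u)^2 = ip \<Omega> u u" by (rule nrm_sq)
    also have "\<dots> \<le> nrm \<Omega> h * nrm \<Omega> z" using a cs by simp
    also have "\<dots> \<le> nrm \<Omega> h * nrm \<Omega> h" using nz nrm_nonneg[of \<Omega> h] by (simp add: mult_left_mono)
    finally show ?thesis by (simp add: power2_eq_square)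
  qed
  then have nu: "nrm \<Omega> u \<le> nrm \<Omega> h" using nrm_nonneg[of \<Omega> h] by (rule power2_le_imp_le)
  have "nrm \<Omega> h \<le> nrm \<Omega> (\<lambda>x. k * g x) + nrm \<Omega> w" unfolding h_def by (rule nrm_triangle[OF kgL wL])
  also have "nrm \<Omega> (\<lambda>x. k * g x) = k * nrm \<Omega> g" using k by (simp add: nrm_cmult)
  finally show ?thesis using nu by simp
qed

theorem theorem3p1:
  fixes \<Omega> :: "(real^'d) set"
    and A :: "real^'d \<Rightarrow> real^'d^'d" and \<beta> :: "real^'d \<Rightarrow> real^'d" and \<gamma> :: "real^'d \<Rightarrow> real"
    and \<alpha>0 T :: real and N :: nat and t :: "nat \<Rightarrow> real"
    and f :: "real \<Rightarrow> real^'d \<Rightarrow> real"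
    and Uh :: "nat \<Rightarrow> 'd pr set"
    and u :: "nat \<Rightarrow> real^'d \<Rightarrow> real" and \<sigma> :: "nat \<Rightarrow> real^'d \<Rightarrow> real^'d"
  assumes dom: "lipschitz_domain \<Omega>" and poly: "polygonal_boundary \<Omega>"
    and A_Linf: "\<forall>i j. Linf \<Omega> (\<lambda>x. A x $ i $ j)"
    and A_sym: "AE x in lebesgue_on \<Omega>. transpose (A x) = A x"
    and \<alpha>0_pos: "\<alpha>0 > 0"
    and A_ell: "AE x in lebesgue_on \<Omega>. lambda_min (A x) \<ge> \<alpha>0"
    and \<beta>_Linf: "\<forall>i. Linf \<Omega> (\<lambda>x. \<beta> x $ i)"
    and \<gamma>_Linf: "Linf \<Omega> \<gamma>"
    and div\<beta>: "\<exists>D. is_weak_div \<Omega> \<beta> D \<and> Linf \<Omega> (\<lambda>x. D x / 2 + \<gamma> x)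
                  \<and> (AE x in lebesgue_on \<Omega>. D x / 2 + \<gamma> x \<ge> 0)"
    and f_L2: "\<forall>s\<in>{0..T}. L2 \<Omega> (f s)"
    and f_cont: "\<forall>s\<in>{0..T}. ((\<lambda>r. nrm \<Omega> (\<lambda>x. f r x - f s x)) \<longlongrightarrow> 0) (at s within {0..T})"
    and u0: "L2 \<Omega> (u 0)"
    and t0: "t 0 = 0" and tN: "t N = T" and t_mono: "\<forall>n<N. t n < t (Suc n)"
    and Uh_sub: "\<forall>n\<in>{1..N}. closed_subspace_U \<Omega> (Uh n)"
    and sol_in: "\<forall>n\<in>{1..N}. (u n, \<sigma> n) \<in> Uh n"
    and sol_eq: "\<forall>n\<in>{1..N}. \<forall>v\<in>Uh n.
        Bform \<Omega> A \<beta> \<gamma> (t n - t (n - 1)) (u n, \<sigma> n) v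
          = Fform \<Omega> \<beta> \<gamma> (t n - t (n - 1)) v (f (t n)) (u (n - 1))"
  shows "\<forall>n\<in>{1..N}. nrm \<Omega> (u n) \<le> (\<Sum>j=1..n. (t j - t (j - 1)) * nrm \<Omega> (f (t j))) + nrm \<Omega> (u 0)"
proof -
  have \<Omega>l: "\<Omega> \<in> lmeasurable" using dom by (simp add: lipschitz_domain_def lmeasurable_open)
  have tle: "i \<le> j \<longrightarrow> j \<le> N \<longrightarrow> t i \<le> t j" for i j
  proof (induction j)
    case 0 then show ?case by simp
  next
    case (Suc j)
    show ?case
    proof (intro impI)
      assume ij: "i \<le> Suc j" and jN: "Suc j \<le> N"
      show "t i \<le> t (Suc j)"
      proof (cases "i = Suc j")
        case True then show ?thesis by simp
      next
        case False
        then have "i \<le> j" using ij by simp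
        then have "t i \<le> t j" using Suc.IH jN by simp
        moreover have "t j < t (Suc j)" using t_mono jN by simp
        ultimately show ?thesis by simp
      qed
    qed
  qed
  have \<beta>m: "\<And>i. (\<lambda>x. \<beta> x $ i) \<in> borel_measurable (lebesgue_on \<Omega>)" using \<beta>_Linf by (simp add: Linf_def)
  obtain Cb where \<beta>b: "\<And>i. AE x in lebesgue_on \<Omega>. \<bar>\<beta> x $ i\<bar> \<le> Cb i"
    using \<beta>_Linf unfolding Linf_def by metis
  have \<gamma>m: "\<gamma> \<in> borel_measurable (lebesgue_on \<Omega>)" using \<gamma>_Linf by (simp add: Linf_def)
  obtain Cg where Cg: "AE x in lebesgue_on \<Omega>. \<bar>\<gamma> x\<bar> \<le> Cg" using \<gamma>_Linf by (auto simp: Linf_def)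
  have step: "nrm \<Omega> (u n) \<le> (t n - t (n - 1)) * nrm \<Omega> (f (t n)) + nrm \<Omega> (u (n - 1))"
    if n: "n \<in> {1..N}" for n
  proof -
    define k where "k = t n - t (n - 1)"
    have n1: "Suc (n - 1) = n" "n - 1 < N" using n by auto
    have kpos: "k > 0" using t_mono n1 by (auto simp: k_def)
    have inU: "(u n, \<sigma> n) \<in> Uh n" using sol_in n by blast
    have "Uh n \<subseteq> Uspace \<Omega>" using Uh_sub n by (simp add: closed_subspace_U_def)
    then have "(u n, \<sigma> n) \<in> Uspace \<Omega>" using inU by blast
    then have uH: "H10 \<Omega> (u n)" and sH: "Hdiv \<Omega> (\<sigma> n)" by (auto simp: Uspace_def)
    have uL: "L2 \<Omega> (u n)" by (rule H10_L2[OF uH])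
    have LL: "L2 \<Omega> (Lop \<Omega> \<beta> \<gamma> (u n, \<sigma> n))" by (rule Lop_L2[OF uH sH \<beta>m \<beta>b \<gamma>m Cg])
    have "0 \<le> t n" "t n \<le> T" using tle[of 0 n] tle[of n N] n t0 tN by auto
    then have gL: "L2 \<Omega> (f (t n))" using f_L2 by simp
    have wL: "L2 \<Omega> (u (n - 1))"
    proof (cases "n - 1 = 0")
      case True then show ?thesis using u0 by simp
    next
      case False
      then have m: "n - 1 \<in> {1..N}" using n by auto
      then have "(u (n-1), \<sigma> (n-1)) \<in> Uh (n-1)" using sol_in by blast
      moreover have "Uh (n-1) \<subseteq> Uspace \<Omega>" using Uh_sub m by (simp add: closed_subspace_U_def)
      ultimately have "(u (n-1), \<sigma> (n-1)) \<in> Uspace \<Omega>" by blast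
      then show ?thesis by (auto simp: Uspace_def intro: H10_L2)
    qed
    have key: "0 \<le> 2 * ip \<Omega> (u n) (Lop \<Omega> \<beta> \<gamma> (u n, \<sigma> n))
        + ipv \<Omega> (Flux \<Omega> A (u n, \<sigma> n)) (Flux \<Omega> A (u n, \<sigma> n))"
      by (rule key_ineq[OF \<Omega>l uH sH A_Linf A_sym \<alpha>0_pos A_ell \<beta>_Linf \<gamma>_Linf div\<beta>])
    have eq: "Bform \<Omega> A \<beta> \<gamma> k (u n, \<sigma> n) (u n, \<sigma> n) = Fform \<Omega> \<beta> \<gamma> k (u n, \<sigma> n) (f (t n)) (u (n - 1))"
      using sol_eq n inU by (simp add: k_def)
    have eq': "(1/k) * ip \<Omega> (u n) (u n) + (ip \<Omega> (u n) (Lop \<Omega> \<beta> \<gamma> (u n, \<sigma> n))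
        + (ip \<Omega> (Lop \<Omega> \<beta> \<gamma> (u n, \<sigma> n)) (u n) + k * ip \<Omega> (Lop \<Omega> \<beta> \<gamma> (u n, \<sigma> n)) (Lop \<Omega> \<beta> \<gamma> (u n, \<sigma> n))
        + ipv \<Omega> (Flux \<Omega> A (u n, \<sigma> n)) (Flux \<Omega> A (u n, \<sigma> n))))
      = k * ip \<Omega> (\<lambda>x. f (t n) x + u (n - 1) x / k) (\<lambda>x. u n x / k + Lop \<Omega> \<beta> \<gamma> (u n, \<sigma> n) x)"
      using eq by (simp add: Bform_def bform_def btilde_def Fform_def)
    have "nrm \<Omega> (u n) \<le> k * nrm \<Omega> (f (t n)) + nrm \<Omega> (u (n - 1))"
      by (rule step_abs[OF kpos uL LL gL wL ipv_self_nonneg key eq'])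
    then show ?thesis by (simp add: k_def)
  qed
  have all: "n \<le> N \<longrightarrow> nrm \<Omega> (u n) \<le> (\<Sum>j=1..n. (t j - t (j - 1)) * nrm \<Omega> (f (t j))) + nrm \<Omega> (u 0)" for n
  proof (induction n)
    case 0 then show ?case by simp
  next
    case (Suc n)
    show ?case
    proof
      assume sN: "Suc n \<le> N"
      have "nrm \<Omega> (u (Suc n)) \<le> (t (Suc n) - t n) * nrm \<Omega> (f (t (Suc n))) + nrm \<Omega> (u n)"
        using step[of "Suc n"] sN by simp
      moreover have "nrm \<Omega> (u n) \<le> (\<Sum>j=1..n. (t j - t (j - 1)) * nrm \<Omega> (f (t j))) + nrm \<Omega> (u 0)"
        using Suc.IH sN by simp
      moreover have "(\<Sum>j=1..Suc n. (t j - t (j - 1)) * nrm \<Omega> (f (t j)))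
          = (\<Sum>j=1..n. (t j - t (j - 1)) * nrm \<Omega> (f (t j))) + (t (Suc n) - t n) * nrm \<Omega> (f (t (Suc n)))"
        by simp
      ultimately show "nrm \<Omega> (u (Suc n)) \<le> (\<Sum>j=1..Suc n. (t j - t (j - 1)) * nrm \<Omega> (f (t j))) + nrm \<Omega> (u 0)"
        by linarith
    qed
  qed
  show ?thesis using all by auto
qed

end
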